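(* Two quadrilaterals $Q_1,Q_2$ in $K^2$ have the same bisectors (the same bisecting lines, each with the same midpoint) if and only if they have the same bisector fields.
   Context: $K$ is a field of characteristic $\neq 2$. Every line $L$ in $K^2$ has an equation $tX-uY+v=0$ normalized so that $t=1$ if $u=0$ and $u=1$ if $u\neq 0$; coefficients denoted $t_L,u_L,v_L$. A quadrilateral $Q=ABA'B'$ consists of four distinct lines $A,B,A',B'$ (sides), not all through one point, with adjacent sides ($A,B$; $B,A'$; $A',B'$; $B',A$) not parallel; opposite sides may be parallel. Vertices: $A\cap B$, $B\cap A'$, $A'\cap B'$, $B'\cap A$ (two may coincide if three sides are concurrent). The centroid is the average of the four vertices. Let $\alpha=t_Au_Bu_{A'}u_{B'}-u_At_Bu_{A'}u_{B'}+u_Au_Bt_{A'}u_{B'}-u_Au_Bu_{A'}t_{B'}$, $\beta=t_Au_Bt_{A'}u_{B'}-u_At_Bu_{A'}t_{B'}$, $\gamma=t_At_Bt_{A'}u_{B'}-t_At_Bu_{A'}t_{B'}+t_Au_Bt_{A'}t_{B'}-u_At_Bt_{A'}t_{B'}$, and $\langle \mathbf v,\mathbf w\rangle_Q=\mathbf v^T\begin{pmatrix}\gamma&-\beta\\-\beta&\alpha\end{pmatrix}\mathbf w$. Lines $\ell_1,\ell_2$ are $Q$-orthogonal if $\langle (u_{\ell_1},t_{\ell_1}),(u_{\ell_2},t_{\ell_2})\rangle_Q=0$. A line $\ell$ crosses a pair $\{\ell_1,\ell_2\}$ if distinct from both and not parallel to both; $\mathrm{mid}_{\{\ell_1,\ell_2\}}(\ell)$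 is the midpoint of the points where $\ell$ meets $\ell_1,\ell_2$ (the point at infinity of $\ell$ if one is at infinity). $\ell$ bisects $Q$ (is a bisector) if $\mathrm{mid}_{\mathsf P}(\ell)$ is the same for all pairs $\mathsf P$ among $\{A,A'\},\{B,B'\}$ that $\ell$ crosses; this common point is the midpoint of the bisector. A pair $\{\ell_1,\ell_2\}$ of bisectors (possibly $\ell_1=\ell_2$) is a $Q$-pair if the midpoint of their midpoints is the centroid of $Q$ and $\ell_1,\ell_2$ are $Q$-orthogonal. The bisector field of $Q$ is the collection of all $Q$-pairs of bisectors of $Q$. *)

theory Defs
  imports Main
begin

text \<open>A line in K^2 is stored by its normalized coefficients (t,u,v) of the
  equation  t X - u Y + v = 0, with t = 1 if u = 0 and u = 1 if u \<noteq> 0.\<close>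

type_synonym 'a line = "'a \<times> 'a \<times> 'a"

definition t_of :: "'a line \<Rightarrow> 'a" where "t_of l = fst l"
definition u_of :: "'a line \<Rightarrow> 'a" where "u_of l = fst (snd l)"
definition v_of :: "'a line \<Rightarrow> 'a" where "v_of l = snd (snd l)"

definition valid_line :: "'a::field line \<Rightarrow> bool" where
  "valid_line l \<longleftrightarrow> (u_of l = 0 \<and> t_of l = 1) \<or> u_of l = 1"

definition on_line :: "'a::field line \<Rightarrow> 'a \<times> 'a \<Rightarrow> bool" where
  "on_line l p \<longleftrightarrow> t_of l * fst p - u_of l * snd p + v_of l = 0"

definition parallel :: "'a::field line \<Rightarrow> 'a line \<Rightarrow> bool" where
  "parallel l1 l2 \<longleftrightarrow> t_of l1 * u_of l2 = t_of l2 * u_of l1"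

definition meet :: "'a::field line \<Rightarrow> 'a line \<Rightarrow> 'a \<times> 'a" where
  "meet l1 l2 = (THE p. on_line l1 p \<and> on_line l2 p)"

definition midpt :: "'a::field \<times> 'a \<Rightarrow> 'a \<times> 'a \<Rightarrow> 'a \<times> 'a" where
  "midpt p q = ((fst p + fst q) / 2, (snd p + snd q) / 2)"

text \<open>Points of the projective closure: affine points, and the point at infinity
  of a line, represented by the (normalized) direction coefficients (t,u) of the line.\<close>
datatype 'a ppoint = Aff "'a \<times> 'a" | Infty "'a \<times> 'a"

text \<open>A quadrilateral Q = A B A' B' given by its four sides in this order.\<close>
type_synonym 'a quad = "'a line \<times> 'a line \<times> 'a line \<times> 'a line"

definition quadrilateral :: "'a::field quad \<Rightarrow> bool" where
  "quadrilateral Q = (case Q of (A, B, A', B') \<Rightarrow>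
     valid_line A \<and> valid_line B \<and> valid_line A' \<and> valid_line B' \<and>
     distinct [A, B, A', B'] \<and>
     \<not> (\<exists>p. on_line A p \<and> on_line B p \<and> on_line A' p \<and> on_line B' p) \<and>
     \<not> parallel A B \<and> \<not> parallel B A' \<and> \<not> parallel A' B' \<and> \<not> parallel B' A)"

definition centroid :: "'a::field quad \<Rightarrow> 'a \<times> 'a" where
  "centroid Q = (case Q of (A, B, A', B') \<Rightarrow>
     (let p1 = meet A B; p2 = meet B A'; p3 = meet A' B'; p4 = meet B' A in
      ((fst p1 + fst p2 + fst p3 + fst p4) / 4, (snd p1 + snd p2 + snd p3 + snd p4) / 4)))"

definition q_alpha :: "'a::field quad \<Rightarrow> 'a" where
  "q_alpha Q = (case Q of (A, B, A', B') \<Rightarrow>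
     t_of A * u_of B * u_of A' * u_of B' - u_of A * t_of B * u_of A' * u_of B'
     + u_of A * u_of B * t_of A' * u_of B' - u_of A * u_of B * u_of A' * t_of B')"

definition q_beta :: "'a::field quad \<Rightarrow> 'a" where
  "q_beta Q = (case Q of (A, B, A', B') \<Rightarrow>
     t_of A * u_of B * t_of A' * u_of B' - u_of A * t_of B * u_of A' * t_of B')"

definition q_gamma :: "'a::field quad \<Rightarrow> 'a" where
  "q_gamma Q = (case Q of (A, B, A', B') \<Rightarrow>
     t_of A * t_of B * t_of A' * u_of B' - t_of A * t_of B * u_of A' * t_of B'
     + t_of A * u_of B * t_of A' * t_of B' - u_of A * t_of B * t_of A' * t_of B')"

definition q_inner :: "'a::field quad \<Rightarrow> 'a \<times> 'a \<Rightarrow> 'a \<times> 'a \<Rightarrow> 'a" where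
  "q_inner Q v w =
     fst v * (q_gamma Q * fst w - q_beta Q * snd w)
     + snd v * (- q_beta Q * fst w + q_alpha Q * snd w)"

definition q_orth :: "'a::field quad \<Rightarrow> 'a line \<Rightarrow> 'a line \<Rightarrow> bool" where
  "q_orth Q l1 l2 \<longleftrightarrow> q_inner Q (u_of l1, t_of l1) (u_of l2, t_of l2) = 0"

definition crosses :: "'a::field line \<Rightarrow> 'a line \<Rightarrow> 'a line \<Rightarrow> bool" where
  "crosses l l1 l2 \<longleftrightarrow> l \<noteq> l1 \<and> l \<noteq> l2 \<and> \<not> (parallel l l1 \<and> parallel l l2)"

text \<open>mid_{l1,l2}(l) (only meaningful when l crosses {l1,l2}).\<close>
definition mid :: "'a::field line \<Rightarrow> 'a line \<Rightarrow> 'a line \<Rightarrow> 'a ppoint" where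
  "mid l1 l2 l = (if parallel l l1 \<or> parallel l l2 then Infty (t_of l, u_of l)
                  else Aff (midpt (meet l l1) (meet l l2)))"

definition bisects :: "'a::field quad \<Rightarrow> 'a line \<Rightarrow> bool" where
  "bisects Q l = (case Q of (A, B, A', B') \<Rightarrow>
     valid_line l \<and> (crosses l A A' \<and> crosses l B B' \<longrightarrow> mid A A' l = mid B B' l))"

definition bisector_mid :: "'a::field quad \<Rightarrow> 'a line \<Rightarrow> 'a ppoint \<Rightarrow> bool" where
  "bisector_mid Q l m = (case Q of (A, B, A', B') \<Rightarrow>
     bisects Q l \<and> ((crosses l A A' \<and> m = mid A A' l) \<or> (crosses l B B' \<and> m = mid B B' l)))"

text \<open>Q-pair: the midpoint of the two midpoints is the centroid (this forces both
  midpoints to be affine) and the lines are Q-orthogonal.\<close>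
definition q_pair :: "'a::field quad \<Rightarrow> 'a line \<Rightarrow> 'a line \<Rightarrow> bool" where
  "q_pair Q l1 l2 \<longleftrightarrow> (\<exists>p1 p2. bisector_mid Q l1 (Aff p1) \<and> bisector_mid Q l2 (Aff p2)
      \<and> midpt p1 p2 = centroid Q) \<and> q_orth Q l1 l2"

definition bisector_field :: "'a::field quad \<Rightarrow> 'a line set set" where
  "bisector_field Q = {{l1, l2} | l1 l2. q_pair Q l1 l2}"

end

theory Submission
  imports Defs
begin

definition lf :: "'a::field line \<Rightarrow> 'a \<times> 'a \<Rightarrow> 'a" where
  "lf l p = t_of l * fst p - u_of l * snd p + v_of l"
definition lin :: "'a::field line \<Rightarrow> 'a \<times> 'a \<Rightarrow> 'a" where
  "lin l X = t_of l * fst X - u_of l * snd X"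
definition dir :: "'a line \<Rightarrow> 'a \<times> 'a" where
  "dir l = (u_of l, t_of l)"

lemma on_line_lf: "on_line l p \<longleftrightarrow> lf l p = 0"
  by (simp add: on_line_def lf_def)

lemma par_lin: "parallel l1 l2 \<longleftrightarrow> lin l1 (dir l2) = 0"
  by (auto simp: parallel_def lin_def dir_def algebra_simps)

lemma lin_dir_self[simp]: "lin l (dir l) = 0"
  by (simp add: lin_def dir_def mult.commute)

lemma par_refl: "parallel l l"
  by (simp add: parallel_def)

lemma par_sym: "parallel l1 l2 \<Longrightarrow> parallel l2 l1"
  by (simp add: parallel_def)

lemma valid_cases: "valid_line l \<Longrightarrow> (u_of l = 0 \<and> t_of l = 1) \<or> u_of l = 1"
  by (simp add: valid_line_def)

lemma par_valid_eq:
  assumes "valid_line l1" "valid_line l2" "parallel l1 l2"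
  shows "t_of l1 = t_of l2 \<and> u_of l1 = u_of l2"
  using assms unfolding valid_line_def parallel_def by auto

lemma line_eq: "t_of l1 = t_of l2 \<Longrightarrow> u_of l1 = u_of l2 \<Longrightarrow> v_of l1 = v_of l2 \<Longrightarrow> l1 = l2"
  by (cases l1; cases l2) (simp add: t_of_def u_of_def v_of_def)

lemma par_valid_common:
  assumes "valid_line l1" "valid_line l2" "parallel l1 l2" "lf l1 p = 0" "lf l2 p = 0"
  shows "l1 = l2"
proof -
  from par_valid_eq[OF assms(1-3)] have "t_of l1 = t_of l2" "u_of l1 = u_of l2" by auto
  with assms(4,5) have "v_of l1 = v_of l2" unfolding lf_def by algebra
  with \<open>t_of l1 = t_of l2\<close> \<open>u_of l1 = u_of l2\<close> show ?thesis by (rule line_eq)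
qed

lemma par_trans:
  assumes "valid_line l1" "valid_line l2" "valid_line l3" "parallel l1 l2" "parallel l2 l3"
  shows "parallel l1 l3"
  using par_valid_eq[OF assms(1,2,4)] par_valid_eq[OF assms(2,3,5)]
  by (simp add: parallel_def)

lemma lf_shift: "lf l (fst p + s * fst X, snd p + s * snd X) = lf l p + s * lin l X"
  by (simp add: lf_def lin_def algebra_simps)

lemma on_dir:
  assumes "valid_line l" "lf l p = 0" "lf l r = 0"
  shows "\<exists>s. r = (fst p + s * u_of l, snd p + s * t_of l)"
proof (cases "u_of l = 0")
  case True
  with assms(1) have t1: "t_of l = 1" by (simp add: valid_line_def)
  with True assms(2,3) have "fst r = fst p" unfolding lf_def by algebra
  then have "r = (fst p + (snd r - snd p) * u_of l, snd p + (snd r - snd p) * t_of l)"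
    using True t1 by (simp add: prod_eq_iff)
  then show ?thesis by blast
next
  case False
  with assms(1) have u1: "u_of l = 1" by (simp add: valid_line_def)
  from assms(2,3) u1 have "snd r = snd p + (fst r - fst p) * t_of l"
    unfolding lf_def by algebra
  then have "r = (fst p + (fst r - fst p) * u_of l, snd p + (fst r - fst p) * t_of l)"
    using u1 by (simp add: prod_eq_iff)
  then show ?thesis by blast
qed

lemma lin_zero_dir:
  assumes "valid_line l" "lin l X = 0"
  shows "\<exists>s. X = (s * u_of l, s * t_of l)"
proof -
  have "lf l (0,0) = v_of l" by (simp add: lf_def)
  have "lf l (fst X - 0, snd X - 0) = lf l (0,0) + lin l X" by (simp add: lf_def lin_def algebra_simps)
  show ?thesis
  proof (cases "u_of l = 0")
    case True
    with assms(1) have t1: "t_of l = 1" by (simp add: valid_line_def)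
    with True assms(2) have "fst X = 0" by (simp add: lin_def)
    then show ?thesis using True t1 by (intro exI[of _ "snd X"]) (simp add: prod_eq_iff)
  next
    case False
    with assms(1) have u1: "u_of l = 1" by (simp add: valid_line_def)
    with assms(2) have "snd X = t_of l * fst X" by (simp add: lin_def)
    then show ?thesis using u1 by (intro exI[of _ "fst X"]) (simp add: prod_eq_iff mult.commute)
  qed
qed

lemma lf_midpt:
  assumes "(2::'a::field) \<noteq> 0"
  shows "lf l (midpt p r) = (lf l p + lf l (r::'a \<times> 'a)) / 2"
proof -
  have "(4::'a) = 2 * 2" by simp
  with assms have "(4::'a) \<noteq> 0" by (metis no_zero_divisors)
  then show ?thesis using assms by (simp add: lf_def midpt_def field_simps)
qed

lemma meet_char:
  assumes "\<not> parallel l1 l2"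
  shows "lf l1 (meet l1 l2) = 0 \<and> lf l2 (meet l1 l2) = 0"
    and "meet l1 l2 = ((v_of l1 * u_of l2 - u_of l1 * v_of l2) / (u_of l1 * t_of l2 - t_of l1 * u_of l2),
                       (t_of l2 * v_of l1 - t_of l1 * v_of l2) / (u_of l1 * t_of l2 - t_of l1 * u_of l2))"
proof -
  define d where "d = u_of l1 * t_of l2 - t_of l1 * u_of l2"
  have d0: "d \<noteq> 0" using assms by (auto simp: d_def parallel_def algebra_simps)
  define p0 where "p0 = ((v_of l1 * u_of l2 - u_of l1 * v_of l2) / d, (t_of l2 * v_of l1 - t_of l1 * v_of l2) / d)"
  have on0: "on_line l1 p0 \<and> on_line l2 p0"
  proof -
    have "t_of l1 * ((v_of l1 * u_of l2 - u_of l1 * v_of l2) / d) - u_of l1 * ((t_of l2 * v_of l1 - t_of l1 * v_of l2) / d) + v_of l1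
       = (t_of l1 * (v_of l1 * u_of l2 - u_of l1 * v_of l2) - u_of l1 * (t_of l2 * v_of l1 - t_of l1 * v_of l2) + v_of l1 * d) / d"
      using d0 by (simp add: field_simps)
    also have "\<dots> = 0" unfolding d_def by (simp add: algebra_simps)
    finally have 1: "on_line l1 p0" by (simp add: on_line_def p0_def)
    have "t_of l2 * ((v_of l1 * u_of l2 - u_of l1 * v_of l2) / d) - u_of l2 * ((t_of l2 * v_of l1 - t_of l1 * v_of l2) / d) + v_of l2
       = (t_of l2 * (v_of l1 * u_of l2 - u_of l1 * v_of l2) - u_of l2 * (t_of l2 * v_of l1 - t_of l1 * v_of l2) + v_of l2 * d) / d"
      using d0 by (simp add: field_simps)
    also have "\<dots> = 0" unfolding d_def by (simp add: algebra_simps)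
    finally have 2: "on_line l2 p0" by (simp add: on_line_def p0_def)
    show ?thesis using 1 2 by simp
  qed
  have uniq: "p = p0" if "on_line l1 p \<and> on_line l2 p" for p
  proof -
    from that have e1: "t_of l1 * fst p - u_of l1 * snd p + v_of l1 = 0"
      and e2: "t_of l2 * fst p - u_of l2 * snd p + v_of l2 = 0" by (auto simp: on_line_def)
    have "fst p * d = v_of l1 * u_of l2 - u_of l1 * v_of l2"
      unfolding d_def using e1 e2 by algebra
    moreover have "snd p * d = t_of l2 * v_of l1 - t_of l1 * v_of l2"
      unfolding d_def using e1 e2 by algebra
    ultimately show ?thesis using d0 unfolding p0_def by (simp add: prod_eq_iff field_simps)
  qed
  have "meet l1 l2 = p0"
    unfolding meet_def apply (rule the_equality) using on0 apply simp using uniq by blast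
  then show "lf l1 (meet l1 l2) = 0 \<and> lf l2 (meet l1 l2) = 0"
    using on0 by (simp add: on_line_lf)
  show "meet l1 l2 = ((v_of l1 * u_of l2 - u_of l1 * v_of l2) / (u_of l1 * t_of l2 - t_of l1 * u_of l2),
                       (t_of l2 * v_of l1 - t_of l1 * v_of l2) / (u_of l1 * t_of l2 - t_of l1 * u_of l2))"
    using \<open>meet l1 l2 = p0\<close> unfolding p0_def d_def by simp
qed


section \<open>Gradients of quadratic functions\<close>

type_synonym 'a gq = "'a \<times> 'a \<times> 'a \<times> 'a \<times> 'a"

definition gD :: "'a::field gq \<Rightarrow> 'a \<times> 'a \<Rightarrow> 'a \<times> 'a \<Rightarrow> 'a" where
  "gD g p X = (case g of (a,b,c,d,e) \<Rightarrow>
     (2*a*fst p + b*snd p + d) * fst X + (b*fst p + 2*c*snd p + e) * snd X)"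

definition qq :: "'a::field gq \<Rightarrow> 'a \<times> 'a \<Rightarrow> 'a" where
  "qq g X = (case g of (a,b,c,d,e) \<Rightarrow> a * fst X * fst X + b * fst X * snd X + c * snd X * snd X)"

definition bp :: "'a::field gq \<Rightarrow> 'a \<times> 'a \<Rightarrow> 'a \<times> 'a \<Rightarrow> 'a" where
  "bp g Y X = (case g of (a,b,c,d,e) \<Rightarrow>
     (2*a*fst Y + b*snd Y) * fst X + (b*fst Y + 2*c*snd Y) * snd X)"

definition pg :: "'a::field line \<Rightarrow> 'a line \<Rightarrow> 'a gq" where
  "pg L L' = (t_of L * t_of L', -(t_of L * u_of L' + u_of L * t_of L'), u_of L * u_of L',
              t_of L * v_of L' + t_of L' * v_of L, -(u_of L * v_of L' + u_of L' * v_of L))"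

definition glc :: "'a::field \<Rightarrow> 'a gq \<Rightarrow> 'a \<Rightarrow> 'a gq \<Rightarrow> 'a gq" where
  "glc x g y h = (case g of (a,b,c,d,e) \<Rightarrow> case h of (a',b',c',d',e') \<Rightarrow>
     (x*a + y*a', x*b + y*b', x*c + y*c', x*d + y*d', x*e + y*e'))"

lemma gD_pg: "gD (pg L L') p X = lf L p * lin L' X + lf L' p * lin L X"
  by (simp add: gD_def pg_def lf_def lin_def algebra_simps)

lemma qq_pg: "qq (pg L L') X = lin L X * lin L' X"
  by (simp add: qq_def pg_def lin_def algebra_simps)

lemma bp_pg: "bp (pg L L') Y X = lin L Y * lin L' X + lin L' Y * lin L X"
  by (simp add: bp_def pg_def lin_def algebra_simps)

lemma pg_comm: "pg L L' = pg L' L"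
  by (simp add: pg_def algebra_simps)

lemma gD_glc: "gD (glc x g y h) p X = x * gD g p X + y * gD h p X"
  by (cases g; cases h) (simp add: gD_def glc_def algebra_simps)

lemma qq_glc: "qq (glc x g y h) X = x * qq g X + y * qq h X"
  by (cases g; cases h) (simp add: qq_def glc_def algebra_simps)

lemma bp_glc: "bp (glc x g y h) Y X = x * bp g Y X + y * bp h Y X"
  by (cases g; cases h) (simp add: bp_def glc_def algebra_simps)

lemma gD_shift: "gD g (fst p + s * fst Y, snd p + s * snd Y) X = gD g p X + s * bp g Y X"
  by (cases g) (simp add: gD_def bp_def algebra_simps)

lemma bp_self: "bp g X X = 2 * qq g X"
  by (cases g) (simp add: bp_def qq_def algebra_simps)

lemma bp_sym: "bp g Y X = bp g X Y"
  by (cases g) (simp add: bp_def algebra_simps)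

lemma bp_scale1: "bp g (s * fst Y, s * snd Y) X = s * bp g Y X"
  by (cases g) (simp add: bp_def algebra_simps)

lemma gD_lin2: "gD g p (s * fst X, s * snd X) = s * gD g p X"
  by (cases g) (simp add: gD_def algebra_simps)

lemma G3:
  assumes two: "(2::'a::field) \<noteq> 0"
    and l: "valid_line l" "lf l P = 0" "lf l R = 0" and T: "lf T P = 0"
  shows "gD (pg T U) (midpt P R) (dir l) = lin T (dir l) * lf U (R::'a \<times> 'a)"
proof -
  obtain s where R: "R = (fst P + s * u_of l, snd P + s * t_of l)" using on_dir[OF l] by blast
  have M: "midpt P R = (fst P + (s/2) * fst (dir l), snd P + (s/2) * snd (dir l))"
    using two by (simp add: R midpt_def dir_def field_simps)
  have "lf T (midpt P R) = lf T P + s/2 * lin T (dir l)" unfolding M by (rule lf_shift)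
  then have h1: "lf T (midpt P R) = s/2 * lin T (dir l)" using T by simp
  have h2: "lf U (midpt P R) = lf U R - s/2 * lin U (dir l)"
  proof -
    have "lf U R = lf U P + s * lin U (dir l)" using lf_shift[of U P s "dir l"] by (simp add: R dir_def)
    moreover have "lf U (midpt P R) = lf U P + s/2 * lin U (dir l)" unfolding M by (rule lf_shift)
    ultimately show ?thesis using two by (simp add: field_simps)
  qed
  have "gD (pg T U) (midpt P R) (dir l) = lf T (midpt P R) * lin U (dir l) + lf U (midpt P R) * lin T (dir l)"
    by (rule gD_pg)
  also have "\<dots> = s/2 * lin T (dir l) * lin U (dir l) + (lf U R - s/2 * lin U (dir l)) * lin T (dir l)"
    by (simp only: h1 h2)
  also have "\<dots> = lin T (dir l) * lf U R" by (simp add: algebra_simps)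
  finally show ?thesis .
qed

lemma gD_pg_on1: "lf L p = 0 \<Longrightarrow> gD (pg L L') p (dir L) = 0"
  by (simp add: gD_pg)

lemma gD_pg_on2: "lf L' p = 0 \<Longrightarrow> gD (pg L L') p (dir L') = 0"
  by (simp add: gD_pg)


section \<open>Characterisation of bisectors\<close>

lemma valid_dir_nz: "valid_line l \<Longrightarrow> s * u_of l = 0 \<Longrightarrow> s * t_of l = 0 \<Longrightarrow> s = 0"
  by (auto simp: valid_line_def)

lemma not_par_neq: "\<not> parallel l S \<Longrightarrow> l \<noteq> S"
  using par_refl by blast

lemma mid_comm: "mid S S' l = mid S' S l"
  by (auto simp: mid_def midpt_def algebra_simps)

lemma crosses_comm: "crosses l S S' = crosses l S' S"
  by (auto simp: crosses_def)

lemma pair_X: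
  assumes two: "(2::'a::field) \<noteq> 0"
    and v: "valid_line l" "valid_line S" "valid_line S'"
    and np: "\<not> parallel l S" "\<not> parallel l S'"
  shows "crosses l S S'"
    and "mid S S' l = Aff (midpt (meet l S) (meet l S'))"
    and "lf l (midpt (meet l S) (meet l S')) = 0"
    and "\<And>M. lf l M = 0 \<Longrightarrow> gD (pg S S') M (dir l) = 0 \<longleftrightarrow> M = midpt (meet l S) (meet l (S'::'a line))"
proof -
  show "crosses l S S'" using np by (auto simp: crosses_def dest: not_par_neq)
  show "mid S S' l = Aff (midpt (meet l S) (meet l S'))" using np by (simp add: mid_def)
  define P where "P = meet l S"
  define R where "R = meet l S'"
  have P: "lf l P = 0" "lf S P = 0" using meet_char(1)[OF np(1)] by (auto simp: P_def)
  have R: "lf l R = 0" "lf S' R = 0" using meet_char(1)[OF np(2)] by (auto simp: R_def)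
  have Mm0: "lf l (midpt P R) = 0" using lf_midpt[OF two, of l P R] P(1) R(1) by (simp add: two)
  then show "lf l (midpt (meet l S) (meet l S')) = 0" by (simp add: P_def R_def)
  have g0: "gD (pg S S') (midpt P R) (dir l) = 0"
    using G3[OF two v(1) P(1) R(1) P(2), of S'] R(2) by simp
  have n1: "lin S (dir l) \<noteq> 0" using np(1) par_sym par_lin by metis
  have n2: "lin S' (dir l) \<noteq> 0" using np(2) par_sym par_lin by metis
  fix M assume M: "lf l M = 0"
  obtain s where Ms: "M = (fst (midpt P R) + s * u_of l, snd (midpt P R) + s * t_of l)"
    using on_dir[OF v(1) Mm0 M] by blast
  have "gD (pg S S') M (dir l) = gD (pg S S') (midpt P R) (dir l) + s * bp (pg S S') (dir l) (dir l)"
    using gD_shift[of "pg S S'" "midpt P R" s "dir l" "dir l"] by (simp add: Ms dir_def)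
  also have "\<dots> = s * (2 * (lin S (dir l) * lin S' (dir l)))"
    using g0 by (simp add: bp_pg algebra_simps)
  finally have eq: "gD (pg S S') M (dir l) = s * (2 * (lin S (dir l) * lin S' (dir l)))" .
  have "gD (pg S S') M (dir l) = 0 \<longleftrightarrow> s = 0" using eq n1 n2 two by simp
  also have "\<dots> \<longleftrightarrow> M = midpt P R"
  proof
    assume "s = 0" then show "M = midpt P R" by (simp add: Ms)
  next
    assume "M = midpt P R"
    then have "s * u_of l = 0" "s * t_of l = 0" using Ms by (auto simp: prod_eq_iff)
    then show "s = 0" using valid_dir_nz[OF v(1)] by blast
  qed
  finally show "gD (pg S S') M (dir l) = 0 \<longleftrightarrow> M = midpt (meet l S) (meet l S')"
    by (simp add: P_def R_def)
qed

lemma pair_I: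
  assumes v: "valid_line l" "valid_line S" "valid_line S'"
    and p: "parallel l S" and np: "\<not> parallel l S'" and ne: "l \<noteq> S"
  shows "crosses l S S'" and "mid S S' l = Infty (t_of l, u_of l)"
    and "\<And>M. lf l M = 0 \<Longrightarrow> gD (pg S S') M (dir l) \<noteq> 0"
proof -
  show "crosses l S S'" using np ne by (auto simp: crosses_def dest: not_par_neq)
  show "mid S S' l = Infty (t_of l, u_of l)" using p by (simp add: mid_def)
  fix M assume M: "lf l M = 0"
  have "lin S (dir l) = 0" using p par_sym par_lin by metis
  then have "gD (pg S S') M (dir l) = lf S M * lin S' (dir l)" by (simp add: gD_pg)
  moreover have "lin S' (dir l) \<noteq> 0" using np par_sym par_lin by metis
  moreover have "lf S M \<noteq> 0" using par_valid_common[OF v(1,2) p M] ne by blast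
  ultimately show "gD (pg S S') M (dir l) \<noteq> 0" by simp
qed

lemma pair_N:
  assumes "\<not> crosses l S S'" "lf l M = 0"
  shows "gD (pg S S') M (dir l) = 0" and "parallel l S \<or> parallel l S'"
proof -
  from assms(1) have c: "l = S \<or> l = S' \<or> (parallel l S \<and> parallel l S')" by (auto simp: crosses_def)
  then show "parallel l S \<or> parallel l S'" using par_refl by blast
  show "gD (pg S S') M (dir l) = 0"
    using c
  proof (elim disjE)
    assume "l = S" then show ?thesis using assms(2) by (simp add: gD_pg)
  next
    assume "l = S'" then show ?thesis using assms(2) by (simp add: gD_pg)
  next
    assume "parallel l S \<and> parallel l S'"
    then have "lin S (dir l) = 0" "lin S' (dir l) = 0" using par_sym par_lin by metis+
    then show ?thesis by (simp add: gD_pg)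
  qed
qed

definition Zq :: "'a::field line \<Rightarrow> 'a line \<Rightarrow> 'a line \<Rightarrow> 'a line \<Rightarrow> 'a line \<Rightarrow> 'a \<times> 'a \<Rightarrow> bool" where
  "Zq A B A' B' l M \<longleftrightarrow> valid_line l \<and> lf l M = 0 \<and> gD (pg A A') M (dir l) = 0 \<and> gD (pg B B') M (dir l) = 0"

lemma quad_facts:
  assumes "quadrilateral (A,B,A',B')"
  shows "valid_line A" "valid_line B" "valid_line A'" "valid_line B'"
    "\<not> parallel A B" "\<not> parallel B A'" "\<not> parallel A' B'" "\<not> parallel B' A"
    "A \<noteq> B" "A \<noteq> A'" "A \<noteq> B'" "B \<noteq> A'" "B \<noteq> B'" "A' \<noteq> B'"
  using assms by (auto simp: quadrilateral_def on_line_lf)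

lemma quad_nocommon:
  assumes "quadrilateral (A,B,A',B')"
  shows "\<not> (lf A p = 0 \<and> lf B p = 0 \<and> lf A' p = 0 \<and> lf B' p = 0)"
  using assms unfolding quadrilateral_def prod.case on_line_lf by blast

lemma side_par_contra:
  assumes q: "quadrilateral (A,B,A',B')" and v: "valid_line l"
    and pa: "parallel l A \<or> parallel l A'" and pb: "parallel l B \<or> parallel l B'"
  shows False
proof -
  note f = quad_facts[OF q]
  have ps: "parallel X Y" if "parallel l X" "parallel l Y" "valid_line X" "valid_line Y" for X Y
    using par_trans[OF that(3) v that(4) par_sym[OF that(1)] that(2)] .
  from pa pb show False
    using ps f(1-8) par_sym by metis
qed

lemma L1:
  assumes two: "(2::'a::field) \<noteq> 0" and q: "quadrilateral (A,B,A',B')"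
  shows "bisector_mid (A,B,A',B') l m \<longleftrightarrow> (\<exists>M. m = Aff M \<and> Zq A B A' B' l (M::'a \<times> 'a))"
proof (cases "valid_line l")
  case False
  then show ?thesis by (simp add: bisector_mid_def bisects_def Zq_def)
next
  case v: True
  note f = quad_facts[OF q]
  have tp: "(\<not> parallel l S \<and> \<not> parallel l S') \<or>
             ((parallel l S \<and> \<not> parallel l S' \<and> l \<noteq> S) \<or> (\<not> parallel l S \<and> parallel l S' \<and> l \<noteq> S')) \<or>
             \<not> crosses l S S'" for S S' :: "'a line"
    by (auto simp: crosses_def)
  have IorN: "parallel l S \<or> parallel l S'" if
    "((parallel l S \<and> \<not> parallel l S' \<and> l \<noteq> S) \<or> (\<not> parallel l S \<and> parallel l S' \<and> l \<noteq> S')) \<or>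
     \<not> crosses l S S'" for S S' :: "'a line"
    using that by (auto simp: crosses_def par_refl)
  consider (XA) "\<not> parallel l A \<and> \<not> parallel l A'"
    | (INA) "((parallel l A \<and> \<not> parallel l A' \<and> l \<noteq> A) \<or> (\<not> parallel l A \<and> parallel l A' \<and> l \<noteq> A')) \<or>
             \<not> crosses l A A'"
    using tp by blast
  then show ?thesis
  proof cases
    case XA
    note xa = pair_X[OF two v f(1) f(3) conjunct1[OF XA] conjunct2[OF XA]]
    consider (XB) "\<not> parallel l B \<and> \<not> parallel l B'"
      | (IB) "(parallel l B \<and> \<not> parallel l B' \<and> l \<noteq> B) \<or> (\<not> parallel l B \<and> parallel l B' \<and> l \<noteq> B')"
      | (NB) "\<not> crosses l B B'"
      using tp by blast
    then show ?thesis
    proof cases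
      case XB
      note xb = pair_X[OF two v f(2) f(4) conjunct1[OF XB] conjunct2[OF XB]]
      define mA where "mA = midpt (meet l A) (meet l A')"
      define mB where "mB = midpt (meet l B) (meet l B')"
      have "bisector_mid (A,B,A',B') l m \<longleftrightarrow> mA = mB \<and> m = Aff mA"
        unfolding bisector_mid_def bisects_def prod.case using xa(1,2) xb(1,2) v
        by (auto simp: mA_def mB_def)
      also have "\<dots> \<longleftrightarrow> (\<exists>M. m = Aff M \<and> Zq A B A' B' l M)"
      proof
        assume "mA = mB \<and> m = Aff mA"
        then show "\<exists>M. m = Aff M \<and> Zq A B A' B' l M"
          using xa(3) xa(4)[of mA] xb(4)[of mA] v unfolding Zq_def mA_def mB_def by auto
      next
        assume "\<exists>M. m = Aff M \<and> Zq A B A' B' l M"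
        then obtain M where "m = Aff M" "Zq A B A' B' l M" by blast
        then show "mA = mB \<and> m = Aff mA"
          using xa(4)[of M] xb(4)[of M] unfolding Zq_def mA_def mB_def by auto
      qed
      finally show ?thesis .
    next
      case IB
      have crB: "crosses l B B'" and midB: "\<exists>z. mid B B' l = Infty z"
        and nz: "\<And>M. lf l M = 0 \<Longrightarrow> gD (pg B B') M (dir l) \<noteq> 0"
        using IB
      proof -
        show "crosses l B B'" using IB pair_I(1)[OF v f(2) f(4)] pair_I(1)[OF v f(4) f(2)] crosses_comm by metis
        show "\<exists>z. mid B B' l = Infty z" using IB pair_I(2)[OF v f(2) f(4)] pair_I(2)[OF v f(4) f(2)] mid_comm by metis
        fix M assume "lf l M = 0"
        then show "gD (pg B B') M (dir l) \<noteq> 0"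
          using IB pair_I(3)[OF v f(2) f(4)] pair_I(3)[OF v f(4) f(2)] pg_comm by metis
      qed
      have "\<not> bisector_mid (A,B,A',B') l m"
        using xa(1,2) crB midB unfolding bisector_mid_def bisects_def by auto
      moreover have "\<not> (\<exists>M. m = Aff M \<and> Zq A B A' B' l M)"
        using nz unfolding Zq_def by blast
      ultimately show ?thesis by blast
    next
      case NB
      define mA where "mA = midpt (meet l A) (meet l A')"
      have "bisector_mid (A,B,A',B') l m \<longleftrightarrow> m = Aff mA"
        unfolding bisector_mid_def bisects_def prod.case using xa(1,2) NB v
        by (auto simp: mA_def)
      also have "\<dots> \<longleftrightarrow> (\<exists>M. m = Aff M \<and> Zq A B A' B' l M)"
      proof
        assume "m = Aff mA"
        then show "\<exists>M. m = Aff M \<and> Zq A B A' B' l M"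
          using xa(3) xa(4)[of mA] pair_N(1)[OF NB, of mA] v unfolding Zq_def mA_def by auto
      next
        assume "\<exists>M. m = Aff M \<and> Zq A B A' B' l M"
        then obtain M where "m = Aff M" "Zq A B A' B' l M" by blast
        then show "m = Aff mA"
          using xa(4)[of M] unfolding Zq_def mA_def by auto
      qed
      finally show ?thesis .
    qed
  next
    case INA
    have pA: "parallel l A \<or> parallel l A'" using IorN[OF INA] .
    consider (XB) "\<not> parallel l B \<and> \<not> parallel l B'"
      | (INB) "((parallel l B \<and> \<not> parallel l B' \<and> l \<noteq> B) \<or> (\<not> parallel l B \<and> parallel l B' \<and> l \<noteq> B')) \<or>
             \<not> crosses l B B'"
      using tp by blast
    then show ?thesis
    proof cases
      case INB
      have pB: "parallel l B \<or> parallel l B'" using IorN[OF INB] .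
      show ?thesis using side_par_contra[OF q v pA pB] by blast
    next
      case XB
      note xb = pair_X[OF two v f(2) f(4) conjunct1[OF XB] conjunct2[OF XB]]
      consider (IA) "(parallel l A \<and> \<not> parallel l A' \<and> l \<noteq> A) \<or> (\<not> parallel l A \<and> parallel l A' \<and> l \<noteq> A')"
        | (NA) "\<not> crosses l A A'" using INA by blast
      then show ?thesis
      proof cases
        case IA
        have crA: "crosses l A A'" and midA: "\<exists>z. mid A A' l = Infty z"
          and nz: "\<And>M. lf l M = 0 \<Longrightarrow> gD (pg A A') M (dir l) \<noteq> 0"
        proof -
          show "crosses l A A'" using IA pair_I(1)[OF v f(1) f(3)] pair_I(1)[OF v f(3) f(1)] crosses_comm by metis
          show "\<exists>z. mid A A' l = Infty z" using IA pair_I(2)[OF v f(1) f(3)] pair_I(2)[OF v f(3) f(1)] mid_comm by metis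
          fix M assume "lf l M = 0"
          then show "gD (pg A A') M (dir l) \<noteq> 0"
            using IA pair_I(3)[OF v f(1) f(3)] pair_I(3)[OF v f(3) f(1)] pg_comm by metis
        qed
        have "\<not> bisector_mid (A,B,A',B') l m"
          using xb(1,2) crA midA unfolding bisector_mid_def bisects_def by auto
        moreover have "\<not> (\<exists>M. m = Aff M \<and> Zq A B A' B' l M)"
          using nz unfolding Zq_def by blast
        ultimately show ?thesis by blast
      next
        case NA
        define mB where "mB = midpt (meet l B) (meet l B')"
        have "bisector_mid (A,B,A',B') l m \<longleftrightarrow> m = Aff mB"
          unfolding bisector_mid_def bisects_def prod.case using xb(1,2) NA v
          by (auto simp: mB_def)
        also have "\<dots> \<longleftrightarrow> (\<exists>M. m = Aff M \<and> Zq A B A' B' l M)"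
        proof
          assume "m = Aff mB"
          then show "\<exists>M. m = Aff M \<and> Zq A B A' B' l M"
            using xb(3) xb(4)[of mB] pair_N(1)[OF NA, of mB] v unfolding Zq_def mB_def by auto
        next
          assume "\<exists>M. m = Aff M \<and> Zq A B A' B' l M"
          then obtain M where "m = Aff M" "Zq A B A' B' l M" by blast
          then show "m = Aff mB"
            using xb(4)[of M] unfolding Zq_def mB_def by auto
        qed
        finally show ?thesis .
      qed
    qed
  qed
qed


lemma midpt_comm: "midpt p r = midpt r p"
  by (simp add: midpt_def add.commute)

definition SC :: "'a::field line \<Rightarrow> 'a line \<Rightarrow> 'a line \<Rightarrow> 'a line \<Rightarrow> 'a gq \<Rightarrow> bool" where
  "SC A B A' B' g \<longleftrightarrow>
     gD g (midpt (meet B' A) (meet A B)) (dir A) = 0 \<and>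
     gD g (midpt (meet A B) (meet B A')) (dir B) = 0 \<and>
     gD g (midpt (meet B A') (meet A' B')) (dir A') = 0 \<and>
     gD g (midpt (meet A' B') (meet B' A)) (dir B') = 0"

lemma vertices:
  assumes q: "quadrilateral (A,B,A',B')"
  shows "lf A (meet A B) = 0" "lf B (meet A B) = 0"
    "lf B (meet B A') = 0" "lf A' (meet B A') = 0"
    "lf A' (meet A' B') = 0" "lf B' (meet A' B') = 0"
    "lf B' (meet B' A) = 0" "lf A (meet B' A) = 0"
  using meet_char(1)[OF quad_facts(5)[OF q]] meet_char(1)[OF quad_facts(6)[OF q]]
    meet_char(1)[OF quad_facts(7)[OF q]] meet_char(1)[OF quad_facts(8)[OF q]] by auto

lemma side_mids_on:
  assumes two: "(2::'a::field) \<noteq> 0" and q: "quadrilateral (A,B,A',B')"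
  shows "lf A (midpt (meet B' A) (meet A B)) = 0"
    "lf B (midpt (meet A B) (meet B A')) = 0"
    "lf A' (midpt (meet B A') (meet A' B')) = 0"
    "lf B' (midpt (meet A' B') (meet B' (A::'a line))) = 0"
  using vertices[OF q] by (simp_all add: lf_midpt[OF two] two)

lemma SC_gA:
  assumes two: "(2::'a::field) \<noteq> 0" and q: "quadrilateral (A,B,A',B')"
  shows "SC A B A' B' (pg A (A'::'a line))"
proof -
  note V = vertices[OF q] and f = quad_facts[OF q] and sm = side_mids_on[OF two q]
  have 1: "gD (pg A A') (midpt (meet B' A) (meet A B)) (dir A) = 0" using sm(1) by (rule gD_pg_on1)
  have 2: "gD (pg A A') (midpt (meet A B) (meet B A')) (dir B) = 0"
    using G3[OF two f(2) V(2) V(3) V(1), of A'] V(4) by simp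
  have 3: "gD (pg A A') (midpt (meet B A') (meet A' B')) (dir A') = 0" using sm(3) by (rule gD_pg_on2)
  have h4: "gD (pg A' A) (midpt (meet A' B') (meet B' A)) (dir B') = lin A' (dir B') * lf A (meet B' A)"
    using G3[OF two f(4) V(6) V(7) V(5), of A] .
  have "pg A' A = pg A A'" by (rule pg_comm)
  with h4 V(8) have 4: "gD (pg A A') (midpt (meet A' B') (meet B' A)) (dir B') = 0" by simp
  show ?thesis using 1 2 3 4 by (simp add: SC_def)
qed

lemma SC_gB:
  assumes two: "(2::'a::field) \<noteq> 0" and q: "quadrilateral (A,B,A',B')"
  shows "SC A B A' B' (pg B (B'::'a line))"
proof -
  note V = vertices[OF q] and f = quad_facts[OF q] and sm = side_mids_on[OF two q]
  have h1: "gD (pg B B') (midpt (meet A B) (meet B' A)) (dir A) = lin B (dir A) * lf B' (meet B' A)"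
    using G3[OF two f(1) V(1) V(8) V(2), of B'] .
  have "midpt (meet A B) (meet B' A) = midpt (meet B' A) (meet A B)" by (rule midpt_comm)
  with h1 V(7) have 1: "gD (pg B B') (midpt (meet B' A) (meet A B)) (dir A) = 0" by simp
  have 2: "gD (pg B B') (midpt (meet A B) (meet B A')) (dir B) = 0" using sm(2) by (rule gD_pg_on1)
  have 3: "gD (pg B B') (midpt (meet B A') (meet A' B')) (dir A') = 0"
    using G3[OF two f(3) V(4) V(5) V(3), of B'] V(6) by simp
  have 4: "gD (pg B B') (midpt (meet A' B') (meet B' A)) (dir B') = 0" using sm(4) by (rule gD_pg_on2)
  show ?thesis using 1 2 3 4 by (simp add: SC_def)
qed

lemma Zq_sides:
  assumes two: "(2::'a::field) \<noteq> 0" and q: "quadrilateral (A,B,A',B')"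
  shows "Zq A B A' B' A (midpt (meet B' A) (meet A B))"
    "Zq A B A' B' B (midpt (meet A B) (meet B A'))"
    "Zq A B A' B' A' (midpt (meet B A') (meet A' B'))"
    "Zq A B A' B' B' (midpt (meet A' B') (meet B' (A::'a line)))"
  using SC_gA[OF two q] SC_gB[OF two q] side_mids_on[OF two q] quad_facts(1-4)[OF q]
  by (auto simp: Zq_def SC_def)

lemma four_nz: "(2::'a::field) \<noteq> 0 \<Longrightarrow> (4::'a) \<noteq> 0"
proof -
  assume "(2::'a) \<noteq> 0"
  moreover have "(4::'a) = 2 * 2" by simp
  ultimately show ?thesis by (metis no_zero_divisors)
qed

lemma eight_nz: "(2::'a::field) \<noteq> 0 \<Longrightarrow> (8::'a) \<noteq> 0"
proof -
  assume "(2::'a) \<noteq> 0"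
  moreover have "(8::'a) = 2 * 4" by simp
  ultimately show ?thesis using four_nz by (metis no_zero_divisors)
qed

lemma centroid_mids:
  assumes two: "(2::'a::field) \<noteq> 0"
  shows "midpt (midpt (meet B' A) (meet A B)) (midpt (meet B A') (meet A' B')) = centroid (A,B,A',B')"
    "midpt (midpt (meet A B) (meet B A')) (midpt (meet A' B') (meet B' A)) = centroid (A,B,A',(B'::'a line))"
  using two four_nz[OF two] eight_nz[OF two] by (simp_all add: midpt_def centroid_def Let_def field_simps)

lemma q_orth_sides:
  "q_orth (A,B,A',B') A A'" "q_orth (A,B,A',B') B B'"
  unfolding q_orth_def q_inner_def q_alpha_def q_beta_def q_gamma_def prod.case fst_conv snd_conv
  by algebra+

lemma q_pair_sides:
  assumes two: "(2::'a::field) \<noteq> 0" and q: "quadrilateral (A,B,A',B')"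
  shows "q_pair (A,B,A',B') A A'" "q_pair (A,B,A',B') B (B'::'a line)"
proof -
  note Z = Zq_sides[OF two q] and L = L1[OF two q]
  show "q_pair (A,B,A',B') A A'"
    unfolding q_pair_def using Z(1) Z(3) L centroid_mids(1)[OF two] q_orth_sides(1) by blast
  show "q_pair (A,B,A',B') B B'"
    unfolding q_pair_def using Z(2) Z(4) L centroid_mids(2)[OF two] q_orth_sides(2) by blast
qed


lemma basis_alg:
  fixes a b c x1 y1 x2 y2 :: "'a::field"
  assumes "(2*a*x1 + b*y1)*x1 + (b*x1 + 2*c*y1)*y1 = 0"
    "(2*a*x2 + b*y2)*x2 + (b*x2 + 2*c*y2)*y2 = 0"
    "(2*a*x1 + b*y1)*x2 + (b*x1 + 2*c*y1)*y2 = 0"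
  shows "2 * (x1*y2 - y1*x2)^3 * a = 0" "(x1*y2 - y1*x2)^3 * b = 0" "2 * (x1*y2 - y1*x2)^3 * c = 0"
  using assms by algebra+

lemma basis0:
  fixes g :: "'a::field gq"
  assumes two: "(2::'a) \<noteq> 0"
    and det: "fst D1 * snd D2 - snd D1 * fst D2 \<noteq> 0"
    and h: "gD g P D1 = 0" "gD g P D2 = 0" "bp g D1 D1 = 0" "bp g D2 D2 = 0" "bp g D1 D2 = 0"
  shows "g = (0,0,0,0,0)"
proof -
  obtain a b c d e where g: "g = (a,b,c,d,e)" by (cases g) auto
  from h(3-5) have e3: "(2*a*fst D1 + b*snd D1)*fst D1 + (b*fst D1 + 2*c*snd D1)*snd D1 = 0"
    "(2*a*fst D2 + b*snd D2)*fst D2 + (b*fst D2 + 2*c*snd D2)*snd D2 = 0"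
    "(2*a*fst D1 + b*snd D1)*fst D2 + (b*fst D1 + 2*c*snd D1)*snd D2 = 0"
    by (simp_all add: g bp_def)
  note r = basis_alg[OF e3]
  have d3: "(fst D1 * snd D2 - snd D1 * fst D2)^3 \<noteq> 0" using det by simp
  have abc: "a = 0" "b = 0" "c = 0" using r d3 two by auto
  from h(1,2) abc have "d * fst D1 + e * snd D1 = 0" "d * fst D2 + e * snd D2 = 0"
    by (simp_all add: g gD_def)
  then have "(fst D1 * snd D2 - snd D1 * fst D2) * d = 0" "(fst D1 * snd D2 - snd D1 * fst D2) * e = 0"
    by algebra+
  then have "d = 0" "e = 0" using det by auto
  with abc show ?thesis by (simp add: g)
qed

lemma gD_zero[simp]: "gD (0,0,0,0,0) p X = 0"
  by (simp add: gD_def)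

lemma gq_eq:
  assumes two: "(2::'a::field) \<noteq> 0" and h: "\<And>M X. gD g M X = gD h M (X::'a \<times> 'a)"
  shows "g = h"
proof -
  obtain a b c d e where g: "g = (a,b,c,d,e)" by (cases g) auto
  obtain a' b' c' d' e' where hh: "h = (a',b',c',d',e')" by (cases h) auto
  have 1: "d = d'" using h[of "(0,0)" "(1,0)"] by (simp add: g hh gD_def)
  have 2: "e = e'" using h[of "(0,0)" "(0,1)"] by (simp add: g hh gD_def)
  have 3: "2*a + d = 2*a' + d'" using h[of "(1,0)" "(1,0)"] by (simp add: g hh gD_def)
  have 4: "b + e = b' + e'" using h[of "(1,0)" "(0,1)"] by (simp add: g hh gD_def)
  have 5: "2*c + e = 2*c' + e'" using h[of "(0,1)" "(0,1)"] by (simp add: g hh gD_def)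
  from 1 3 two have "a = a'" by simp
  moreover from 2 4 have "b = b'" by simp
  moreover from 2 5 two have "c = c'" by simp
  ultimately show ?thesis using 1 2 by (simp add: g hh)
qed

lemma gD_diff: "gD g (fst p + s * fst Y, snd p + s * snd Y) X - gD g p X = s * bp g Y X"
  using gD_shift[of g p s Y X] by simp

lemma shift_on_side:
  assumes v: "valid_line L" "lf L P = 0" "lf L R = 0"
    and q0: "qq g (dir L) = 0"
  shows "gD g R (dir L) = gD g P (dir L)"
proof -
  obtain s where R: "R = (fst P + s * u_of L, snd P + s * t_of L)" using on_dir[OF v] by blast
  have "gD g R (dir L) = gD g P (dir L) + s * bp g (dir L) (dir L)"
    using gD_shift[of g P s "dir L" "dir L"] by (simp add: R dir_def)
  then show ?thesis using q0 by (simp add: bp_self)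
qed

lemma LS:
  assumes two: "(2::'a::field) \<noteq> 0" and q: "quadrilateral (A,B,A',B')"
    and sc: "SC A B A' B' g"
  shows "\<exists>x y. g = glc x (pg A A') y (pg B (B'::'a line))"
proof -
  note f = quad_facts[OF q] and V = vertices[OF q] and sm = side_mids_on[OF two q]
  define V1 where "V1 = meet A B"
  define V2 where "V2 = meet B A'"
  define V3 where "V3 = meet A' B'"
  define V4 where "V4 = meet B' A"
  have nAB: "lin A (dir B) \<noteq> 0" using f(5) par_lin by metis
  have nBA: "lin B (dir A) \<noteq> 0" using f(5) par_sym par_lin by metis
  have nA'B: "lin A' (dir B) \<noteq> 0" using f(6) par_sym par_lin by metis
  have nBA': "lin B (dir A') \<noteq> 0" using f(6) par_lin by metis
  have nB'A: "lin B' (dir A) \<noteq> 0" using f(8) par_lin by metis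
  have nAB': "lin A (dir B') \<noteq> 0" using f(8) par_sym par_lin by metis
  define gA where "gA = pg A A'"
  define gB where "gB = pg B B'"
  define gAB where "gAB = pg A B"
  define x where "x = qq g (dir B) / (lin A (dir B) * lin A' (dir B))"
  define y where "y = qq g (dir A) / (lin B (dir A) * lin B' (dir A))"
  define r where "r = glc 1 g (-1) (glc x gA y gB)"
  have qrA: "qq r (dir A) = 0"
    using nBA nB'A by (simp add: r_def qq_glc gA_def gB_def qq_pg y_def)
  have qrB: "qq r (dir B) = 0"
    using nAB nA'B by (simp add: r_def qq_glc gA_def gB_def qq_pg x_def)
  have gDr: "gD r M X = gD g M X - (x * gD gA M X + y * gD gB M X)" for M X
    by (simp add: r_def gD_glc)
  have scA: "SC A B A' B' gA" using SC_gA[OF two q] by (simp add: gA_def)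
  have scB: "SC A B A' B' gB" using SC_gB[OF two q] by (simp add: gB_def)
  have scr: "SC A B A' B' r" using sc scA scB by (simp add: SC_def gDr)
  define k where "k = bp r (dir A) (dir B) / (lin B (dir A) * lin A (dir B))"
  define s where "s = glc 1 r (-k) gAB"
  have bpAB: "bp gAB (dir A) (dir B) = lin B (dir A) * lin A (dir B)"
    by (simp add: gAB_def bp_pg)
  have s0: "s = (0,0,0,0,0)"
  proof (rule basis0[OF two, of "dir A" "dir B" s V1])
    show "fst (dir A) * snd (dir B) - snd (dir A) * fst (dir B) \<noteq> 0"
      using nAB by (simp add: dir_def lin_def algebra_simps)
    have "gD r V1 (dir A) = gD r (midpt (meet B' A) (meet A B)) (dir A)"
      using shift_on_side[OF f(1) sm(1) V(1) qrA] by (simp add: V1_def)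
    also have "\<dots> = 0" using scr by (simp add: SC_def)
    finally have "gD r V1 (dir A) = 0" .
    moreover have "gD gAB V1 (dir A) = 0" using V(1,2) by (simp add: gAB_def gD_pg V1_def)
    ultimately show "gD s V1 (dir A) = 0" by (simp add: s_def gD_glc)
    have "gD r V1 (dir B) = gD r (midpt (meet A B) (meet B A')) (dir B)"
      using shift_on_side[OF f(2) sm(2) V(2) qrB] by (simp add: V1_def)
    also have "\<dots> = 0" using scr by (simp add: SC_def)
    finally have "gD r V1 (dir B) = 0" .
    moreover have "gD gAB V1 (dir B) = 0" using V(1,2) by (simp add: gAB_def gD_pg V1_def)
    ultimately show "gD s V1 (dir B) = 0" by (simp add: s_def gD_glc)
    show "bp s (dir A) (dir A) = 0"
      using qrA by (simp add: s_def qq_glc bp_self gAB_def qq_pg)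
    show "bp s (dir B) (dir B) = 0"
      using qrB by (simp add: s_def qq_glc bp_self gAB_def qq_pg)
    show "bp s (dir A) (dir B) = 0"
      using nAB nBA bpAB by (simp add: s_def bp_glc k_def)
  qed
  have rk: "gD r M X = k * gD gAB M X" for M X
  proof -
    have "gD s M X = 0" using s0 by simp
    then show ?thesis by (simp add: s_def gD_glc)
  qed
  have k0: "k = 0"
  proof (rule ccontr)
    assume kn: "k \<noteq> 0"
    have "gD gAB (midpt V2 V3) (dir A') = 0"
      using rk[of "midpt V2 V3" "dir A'"] scr kn by (simp add: SC_def V2_def V3_def)
    moreover have "gD (pg B A) (midpt V2 V3) (dir A') = lin B (dir A') * lf A V3"
      using G3[OF two f(3) V(4) V(5) V(3), of A] by (simp add: V2_def V3_def)
    moreover have "pg B A = gAB" by (simp add: gAB_def pg_comm)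
    ultimately have a3: "lf A V3 = 0" using nBA' by simp
    have "gD gAB (midpt V3 V4) (dir B') = 0"
      using rk[of "midpt V3 V4" "dir B'"] scr kn by (simp add: SC_def V3_def V4_def)
    moreover have "gD (pg A B) (midpt V4 V3) (dir B') = lin A (dir B') * lf B V3"
      using G3[OF two f(4) V(7) V(6) V(8), of B] by (simp add: V4_def V3_def)
    moreover have "midpt V4 V3 = midpt V3 V4" by (rule midpt_comm)
    ultimately have b3: "lf B V3 = 0" using nAB' by (simp add: gAB_def)
    show False using quad_nocommon[OF q, of V3] a3 b3 V(5,6) by (simp add: V3_def)
  qed
  have "gD g M X = gD (glc x gA y gB) M X" for M X
    using rk[of M X] k0 by (simp add: gDr gD_glc)
  then have "g = glc x gA y gB" by (rule gq_eq[OF two])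
  then show ?thesis by (auto simp: gA_def gB_def)
qed


section \<open>Q-pairs of distinct lines lie in the pencil\<close>

lemma hl_alg:
  fixes p1 p2 p3 uA tA uB tB al be ga :: "'a::field"
  assumes "p1*uA*uA + p2*uA*tA + p3*tA*tA = 0"
    "p1*uB*uB + p2*uB*tB + p3*tB*tB = 0"
    "al*p1 + be*p2 + ga*p3 = 0"
  shows "(uA*uA*(uB*tB*ga-tB*tB*be) - uA*tA*(uB*uB*ga-tB*tB*al) + tA*tA*(uB*uB*be-uB*tB*al)) * p1 = 0"
    "(uA*uA*(uB*tB*ga-tB*tB*be) - uA*tA*(uB*uB*ga-tB*tB*al) + tA*tA*(uB*uB*be-uB*tB*al)) * p2 = 0"
    "(uA*uA*(uB*tB*ga-tB*tB*be) - uA*tA*(uB*uB*ga-tB*tB*al) + tA*tA*(uB*uB*be-uB*tB*al)) * p3 = 0"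
  using assms by algebra+

definition PR :: "'a::field quad \<Rightarrow> 'a gq \<Rightarrow> 'a" where
  "PR Q g = (case g of (a,b,c,d,e) \<Rightarrow> q_alpha Q * a + q_beta Q * b + q_gamma Q * c)"

lemma PR_pg: "PR Q (pg L L') = q_inner Q (dir L) (dir L')"
  by (simp add: PR_def pg_def q_inner_def dir_def algebra_simps)

lemma PR_glc: "PR Q (glc x g y h) = x * PR Q g + y * PR Q h"
  by (cases g; cases h) (simp add: PR_def glc_def algebra_simps)

lemma HL:
  assumes q: "quadrilateral (A,B,A',B')"
    and orth: "q_inner (A,B,A',B') (dir l1) (dir l2) = 0"
  shows "\<exists>x y. \<forall>X. qq (pg l1 l2) X = qq (glc x (pg A A') y (pg B B')) (X::'a::field \<times> 'a)"
proof -
  note f = quad_facts[OF q]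
  have nAB: "lin A (dir B) \<noteq> 0" using f(5) par_lin by metis
  have nBA: "lin B (dir A) \<noteq> 0" using f(5) par_sym par_lin by metis
  have nA'B: "lin A' (dir B) \<noteq> 0" using f(6) par_sym par_lin by metis
  have nB'A: "lin B' (dir A) \<noteq> 0" using f(8) par_lin by metis
  have nAB': "lin A (dir B') \<noteq> 0" using f(8) par_sym par_lin by metis
  define P where "P = pg l1 l2"
  define x where "x = qq P (dir B) / (lin A (dir B) * lin A' (dir B))"
  define y where "y = qq P (dir A) / (lin B (dir A) * lin B' (dir A))"
  define d where "d = glc 1 P (-1) (glc x (pg A A') y (pg B B'))"
  obtain p1 p2 p3 p4 p5 where dd: "d = (p1,p2,p3,p4,p5)" by (cases d) auto
  have e1: "qq d (dir A) = 0"
    using nBA nB'A by (simp add: d_def qq_glc qq_pg y_def)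
  have e2: "qq d (dir B) = 0"
    using nAB nA'B by (simp add: d_def qq_glc qq_pg x_def)
  have o1: "q_inner (A,B,A',B') (dir A) (dir A') = 0"
    using q_orth_sides(1)[of A B A' B'] by (simp add: q_orth_def dir_def)
  have o2: "q_inner (A,B,A',B') (dir B) (dir B') = 0"
    using q_orth_sides(2)[of A B A' B'] by (simp add: q_orth_def dir_def)
  have e3: "PR (A,B,A',B') d = 0"
    using orth o1 o2 by (simp add: d_def PR_glc PR_pg P_def)
  have E1: "p1*u_of A*u_of A + p2*u_of A*t_of A + p3*t_of A*t_of A = 0"
    using e1 by (simp add: dd qq_def dir_def)
  have E2: "p1*u_of B*u_of B + p2*u_of B*t_of B + p3*t_of B*t_of B = 0"
    using e2 by (simp add: dd qq_def dir_def)
  have E3: "q_alpha (A,B,A',B')*p1 + q_beta (A,B,A',B')*p2 + q_gamma (A,B,A',B')*p3 = 0"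
    using e3 by (simp add: dd PR_def)
  note H = hl_alg[OF E1 E2 E3]
  have Dnz: "(t_of A * u_of B - u_of A * t_of B)^2 * (t_of A * u_of B' - u_of A * t_of B') *
             (t_of A' * u_of B - u_of A' * t_of B) \<noteq> 0"
    using nAB nAB' nA'B by (simp add: lin_def dir_def)
  have DI: "u_of A*u_of A*(u_of B*t_of B*q_gamma (A,B,A',B')-t_of B*t_of B*q_beta (A,B,A',B'))
     - u_of A*t_of A*(u_of B*u_of B*q_gamma (A,B,A',B')-t_of B*t_of B*q_alpha (A,B,A',B'))
     + t_of A*t_of A*(u_of B*u_of B*q_beta (A,B,A',B')-u_of B*t_of B*q_alpha (A,B,A',B'))
     = (t_of A * u_of B - u_of A * t_of B)^2 * (t_of A * u_of B' - u_of A * t_of B') *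
       (t_of A' * u_of B - u_of A' * t_of B)"
    unfolding q_alpha_def q_beta_def q_gamma_def prod.case by algebra
  have "p1 = 0" "p2 = 0" "p3 = 0"
    using H Dnz unfolding DI by auto
  then have dq: "qq d X = 0" for X by (simp add: dd qq_def)
  have "qq P X = qq (glc x (pg A A') y (pg B B')) X" for X
    using dq[of X] unfolding d_def qq_glc by algebra
  then show ?thesis unfolding P_def by blast
qed

lemma lin_kernel:
  assumes "valid_line l" "k1 * u_of l + k2 * t_of l = 0"
  shows "\<exists>c. \<forall>X. k1 * fst X + k2 * snd X = c * lin l X"
proof (cases "u_of l = 0")
  case True
  with assms have t1: "t_of l = 1" and "k2 = 0" by (auto simp: valid_line_def)
  then show ?thesis using True by (intro exI[of _ k1]) (simp add: lin_def)
next
  case False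
  with assms(1) have u1: "u_of l = 1" by (simp add: valid_line_def)
  with assms(2) have "k1 = - k2 * t_of l" by (simp add: algebra_simps eq_neg_iff_add_eq_0)
  then show ?thesis using u1 by (intro exI[of _ "-k2"]) (simp add: lin_def algebra_simps)
qed

lemma LK:
  assumes two: "(2::'a::field) \<noteq> 0" and q: "quadrilateral (A,B,A',B')"
    and qp: "q_pair (A,B,A',B') l1 l2" and ne: "l1 \<noteq> l2"
  shows "SC A B A' B' (pg l1 (l2::'a line))"
proof -
  note f = quad_facts[OF q] and V = vertices[OF q]
  obtain p1 p2 where b1: "bisector_mid (A,B,A',B') l1 (Aff p1)" and b2: "bisector_mid (A,B,A',B') l2 (Aff p2)"
    and mc: "midpt p1 p2 = centroid (A,B,A',B')" and orth: "q_orth (A,B,A',B') l1 l2"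
    using qp unfolding q_pair_def by blast
  have Z1: "Zq A B A' B' l1 p1" using b1 L1[OF two q] by auto
  have Z2: "Zq A B A' B' l2 p2" using b2 L1[OF two q] by auto
  have v1: "valid_line l1" and v2: "valid_line l2" using Z1 Z2 by (auto simp: Zq_def)
  obtain x y where hl: "\<And>X. qq (pg l1 l2) X = qq (glc x (pg A A') y (pg B B')) X"
    using HL[OF q] orth unfolding q_orth_def by (metis dir_def)
  define e where "e = glc 1 (pg l1 l2) (-1) (glc x (pg A A') y (pg B B'))"
  have qe: "qq e X = 0" for X using hl[of X] by (simp add: e_def qq_glc)
  obtain a b c k1 k2 where ee: "e = (a,b,c,k1,k2)" by (cases e) auto
  have "a = 0" using qe[of "(1,0)"] by (simp add: ee qq_def)
  moreover have "c = 0" using qe[of "(0,1)"] by (simp add: ee qq_def)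
  moreover have "b = 0" using qe[of "(1,1)"] calculation by (simp add: ee qq_def)
  ultimately have gDe: "gD e M X = k1 * fst X + k2 * snd X" for M X by (simp add: ee gD_def)
  have gDP: "gD (pg l1 l2) M X = gD e M X + (x * gD (pg A A') M X + y * gD (pg B B') M X)" for M X
    by (simp add: e_def gD_glc)
  have K1: "k1 * u_of l1 + k2 * t_of l1 = 0"
  proof -
    have "gD (pg l1 l2) p1 (dir l1) = 0" using Z1 by (simp add: Zq_def gD_pg)
    then show ?thesis using Z1 gDP[of p1 "dir l1"] gDe[of p1 "dir l1"] by (simp add: Zq_def dir_def)
  qed
  have K2: "k1 * u_of l2 + k2 * t_of l2 = 0"
  proof -
    have "gD (pg l1 l2) p2 (dir l2) = 0" using Z2 by (simp add: Zq_def gD_pg)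
    then show ?thesis using Z2 gDP[of p2 "dir l2"] gDe[of p2 "dir l2"] by (simp add: Zq_def dir_def)
  qed
  have scA: "SC A B A' B' (pg A A')" by (rule SC_gA[OF two q])
  have scB: "SC A B A' B' (pg B B')" by (rule SC_gB[OF two q])
  \<comment> \<open>It suffices to show that the constant gradient of e vanishes.\<close>
  have suff: "SC A B A' B' (pg l1 l2)" if "k1 = 0" "k2 = 0"
    using scA scB that by (simp add: SC_def gDP gDe)
  show ?thesis
  proof (cases "parallel l1 l2")
    case False
    have "(t_of l1 * u_of l2 - u_of l1 * t_of l2) * k1 = 0" "(t_of l1 * u_of l2 - u_of l1 * t_of l2) * k2 = 0"
      using K1 K2 by algebra+
    moreover have "t_of l1 * u_of l2 - u_of l1 * t_of l2 \<noteq> 0" using False by (simp add: parallel_def mult.commute)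
    ultimately show ?thesis using suff by simp
  next
    case True
    obtain kk where kk: "\<And>X. k1 * fst X + k2 * snd X = kk * lin l1 X" using lin_kernel[OF v1 K1] by blast
    have tu: "t_of l1 = t_of l2" "u_of l1 = u_of l2" using par_valid_eq[OF v1 v2 True] by auto
    define c where "c = centroid (A,B,A',B')"
    define nu where "nu M = t_of l1 * (fst M - fst c) - u_of l1 * (snd M - snd c)" for M
    have l1p: "lf l1 p1 = 0" and l2p: "lf l2 p2 = 0" using Z1 Z2 by (auto simp: Zq_def)
    have cc: "fst p1 + fst p2 = 2 * fst c" "snd p1 + snd p2 = 2 * snd c"
      using mc two by (auto simp: c_def midpt_def prod_eq_iff field_simps)
    have sumlf: "lf l1 M + lf l2 M = 2 * nu M" for M
    proof -
      have "lf l1 M + lf l2 M = lf l1 M + lf l2 M - lf l1 p1 - lf l2 p2" using l1p l2p by simp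
      also have "\<dots> = t_of l1 * (2 * fst M - (fst p1 + fst p2)) - u_of l1 * (2 * snd M - (snd p1 + snd p2))"
        using tu by (simp add: lf_def algebra_simps)
      also have "\<dots> = 2 * nu M" by (simp add: cc nu_def algebra_simps)
      finally show ?thesis .
    qed
    have side: "kk * lin l1 X = 2 * lin l1 X * nu M" if "gD (pg A A') M X = 0" "gD (pg B B') M X = 0" for M X
    proof -
      have "gD (pg l1 l2) M X = lin l1 X * (lf l1 M + lf l2 M)"
        using tu by (simp add: gD_pg lin_def algebra_simps)
      then have "gD (pg l1 l2) M X = 2 * lin l1 X * nu M" by (simp add: sumlf)
      moreover have "gD (pg l1 l2) M X = kk * lin l1 X" using gDP[of M X] gDe[of M X] kk[of X] that by simp
      ultimately show ?thesis by simp
    qed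
    define MA where "MA = midpt (meet B' A) (meet A B)"
    define MB where "MB = midpt (meet A B) (meet B A')"
    define MA' where "MA' = midpt (meet B A') (meet A' B')"
    define MB' where "MB' = midpt (meet A' B') (meet B' A)"
    have sA: "kk * lin l1 (dir A) = 2 * lin l1 (dir A) * nu MA"
      using side scA scB by (simp add: SC_def MA_def)
    have sB: "kk * lin l1 (dir B) = 2 * lin l1 (dir B) * nu MB"
      using side scA scB by (simp add: SC_def MB_def)
    have sA': "kk * lin l1 (dir A') = 2 * lin l1 (dir A') * nu MA'"
      using side scA scB by (simp add: SC_def MA'_def)
    have sB': "kk * lin l1 (dir B') = 2 * lin l1 (dir B') * nu MB'"
      using side scA scB by (simp add: SC_def MB'_def)
    have nuA: "nu MA + nu MA' = 0"
    proof -
      have "midpt MA MA' = c" using centroid_mids(1)[OF two] by (simp add: MA_def MA'_def c_def)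
      then have "fst MA + fst MA' = 2 * fst c" "snd MA + snd MA' = 2 * snd c"
        using two by (auto simp: midpt_def prod_eq_iff field_simps)
      moreover have "nu MA + nu MA' = t_of l1 * ((fst MA + fst MA') - 2 * fst c) - u_of l1 * ((snd MA + snd MA') - 2 * snd c)"
        by (simp add: nu_def algebra_simps)
      ultimately show ?thesis by simp
    qed
    have nuB: "nu MB + nu MB' = 0"
    proof -
      have "midpt MB MB' = c" using centroid_mids(2)[OF two] by (simp add: MB_def MB'_def c_def)
      then have "fst MB + fst MB' = 2 * fst c" "snd MB + snd MB' = 2 * snd c"
        using two by (auto simp: midpt_def prod_eq_iff field_simps)
      moreover have "nu MB + nu MB' = t_of l1 * ((fst MB + fst MB') - 2 * fst c) - u_of l1 * ((snd MB + snd MB') - 2 * snd c)"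
        by (simp add: nu_def algebra_simps)
      ultimately show ?thesis by simp
    qed
    have kk0: "kk = 0"
    proof (cases "lin l1 (dir A) \<noteq> 0 \<and> lin l1 (dir A') \<noteq> 0")
      case True
      then have h1: "kk = 2 * nu MA" and h2: "kk = 2 * nu MA'" using sA sA' by auto
      have "2 * kk = 0" using h1 h2 nuA by algebra
      then show ?thesis using two by simp
    next
      case False
      then have "parallel l1 A \<or> parallel l1 A'" using par_lin by metis
      then have "\<not> parallel l1 B" "\<not> parallel l1 B'"
        using side_par_contra[OF q v1] by blast+
      then have "lin l1 (dir B) \<noteq> 0" "lin l1 (dir B') \<noteq> 0" using par_lin by metis+
      then have h1: "kk = 2 * nu MB" and h2: "kk = 2 * nu MB'" using sB sB' by auto
      have "2 * kk = 0" using h1 h2 nuB by algebra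
      then show ?thesis using two by simp
    qed
    have "k1 = 0" using kk[of "(1,0)"] kk0 by simp
    moreover have "k2 = 0" using kk[of "(0,1)"] kk0 by simp
    ultimately show ?thesis by (rule suff)
  qed
qed


section \<open>The Jacobian of the pencil is centred at the centroid\<close>

definition LH :: "'a::field \<Rightarrow> 'a \<Rightarrow> 'a \<Rightarrow> 'a \<Rightarrow> 'a \<Rightarrow> 'a \<Rightarrow> 'a" where
  "LH t u v x y e = t*x - u*y + v*e"
definition LN :: "'a::field \<Rightarrow> 'a \<Rightarrow> 'a \<Rightarrow> 'a \<Rightarrow> 'a" where
  "LN t u x y = t*x - u*y"
definition NX :: "'a::field \<Rightarrow> 'a \<Rightarrow> 'a \<Rightarrow> 'a \<Rightarrow> 'a \<Rightarrow> 'a \<Rightarrow> 'a" where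
  "NX t u v t' u' v' = v*u' - u*v'"
definition NY :: "'a::field \<Rightarrow> 'a \<Rightarrow> 'a \<Rightarrow> 'a \<Rightarrow> 'a \<Rightarrow> 'a \<Rightarrow> 'a" where
  "NY t u v t' u' v' = t'*v - t*v'"
definition DE :: "'a::field \<Rightarrow> 'a \<Rightarrow> 'a \<Rightarrow> 'a \<Rightarrow> 'a \<Rightarrow> 'a \<Rightarrow> 'a" where
  "DE t u v t' u' v' = u*t' - t*u'"
definition S4 :: "'a::field \<Rightarrow> 'a \<Rightarrow> 'a \<Rightarrow> 'a \<Rightarrow> 'a \<Rightarrow> 'a \<Rightarrow> 'a \<Rightarrow> 'a \<Rightarrow> 'a \<Rightarrow> 'a \<Rightarrow> 'a \<Rightarrow> 'a \<Rightarrow> 'a \<Rightarrow> 'a \<Rightarrow> 'a \<Rightarrow> 'a" where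
  "S4 t u v tA uA vA tB uB vB tA' uA' vA' tB' uB' vB' =
   LH t u v (NX tA uA vA tB uB vB) (NY tA uA vA tB uB vB) (DE tA uA vA tB uB vB) * DE tB uB vB tA' uA' vA' * DE tA' uA' vA' tB' uB' vB' * DE tB' uB' vB' tA uA vA
 + LH t u v (NX tB uB vB tA' uA' vA') (NY tB uB vB tA' uA' vA') (DE tB uB vB tA' uA' vA') * DE tA uA vA tB uB vB * DE tA' uA' vA' tB' uB' vB' * DE tB' uB' vB' tA uA vA
 + LH t u v (NX tA' uA' vA' tB' uB' vB') (NY tA' uA' vA' tB' uB' vB') (DE tA' uA' vA' tB' uB' vB') * DE tA uA vA tB uB vB * DE tB uB vB tA' uA' vA' * DE tB' uB' vB' tA uA vA
 + LH t u v (NX tB' uB' vB' tA uA vA) (NY tB' uB' vB' tA uA vA) (DE tB' uB' vB' tA uA vA) * DE tA uA vA tB uB vB * DE tB uB vB tA' uA' vA' * DE tA' uA' vA' tB' uB' vB'"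

lemma J3: fixes tA uA vA tB uB vB tA' uA' vA' tB' uB' vB' X Y :: "'a::field"
  shows "
   (tA'*uB' - uA'*tB') * (S4 tA uA vA tA uA vA tB uB vB tA' uA' vA' tB' uB' vB' * LN tB uB X Y + S4 tB uB vB tA uA vA tB uB vB tA' uA' vA' tB' uB' vB' * LN tA uA X Y)
 + (tA'*uB - uA'*tB) * (S4 tA uA vA tA uA vA tB uB vB tA' uA' vA' tB' uB' vB' * LN tB' uB' X Y + S4 tB' uB' vB' tA uA vA tB uB vB tA' uA' vA' tB' uB' vB' * LN tA uA X Y)
 + (tA*uB' - uA*tB') * (S4 tA' uA' vA' tA uA vA tB uB vB tA' uA' vA' tB' uB' vB' * LN tB uB X Y + S4 tB uB vB tA uA vA tB uB vB tA' uA' vA' tB' uB' vB' * LN tA' uA' X Y)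
 + (tA*uB - uA*tB) * (S4 tA' uA' vA' tA uA vA tB uB vB tA' uA' vA' tB' uB' vB' * LN tB' uB' X Y + S4 tB' uB' vB' tA uA vA tB uB vB tA' uA' vA' tB' uB' vB' * LN tA' uA' X Y)
  = 0"
  unfolding S4_def LH_def LN_def NX_def NY_def DE_def
  by algebra

definition Jf :: "'a::field line \<Rightarrow> 'a line \<Rightarrow> 'a line \<Rightarrow> 'a line \<Rightarrow> 'a \<times> 'a \<Rightarrow> 'a" where
  "Jf A B A' B' M = gD (pg A A') M (1,0) * gD (pg B B') M (0,1) - gD (pg A A') M (0,1) * gD (pg B B') M (1,0)"

lemma J4: "Jf A B A' B' M =
    (u_of A' * t_of B' - t_of A' * u_of B') * (lf A M * lf B M)
  + (u_of A' * t_of B - t_of A' * u_of B) * (lf A M * lf B' M)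
  + (u_of A * t_of B' - t_of A * u_of B') * (lf A' M * lf B M)
  + (u_of A * t_of B - t_of A * u_of B) * (lf A' M * lf B' M)"
  unfolding Jf_def gD_pg lin_def by (simp add: algebra_simps)

lemma lf_add: "lf l (fst p + fst X, snd p + snd X) = lf l p + lin l X"
  by (simp add: lf_def lin_def algebra_simps)

lemma lf_div: "d \<noteq> 0 \<Longrightarrow> lf L (x/d, y/d) * d = t_of L * x - u_of L * y + v_of L * (d::'a::field)"
  by (simp add: lf_def field_simps)

lemma lf_vertex:
  assumes "\<not> parallel l1 l2"
  shows "lf L (meet l1 l2) * DE (t_of l1) (u_of l1) (v_of l1) (t_of l2) (u_of l2) (v_of l2) =
    LH (t_of L) (u_of L) (v_of L) (NX (t_of l1) (u_of l1) (v_of l1) (t_of l2) (u_of l2) (v_of l2))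
       (NY (t_of l1) (u_of l1) (v_of l1) (t_of l2) (u_of l2) (v_of l2)) (DE (t_of l1) (u_of l1) (v_of l1) (t_of l2) (u_of l2) (v_of l2))"
proof -
  have d: "u_of l1 * t_of l2 - t_of l1 * u_of l2 \<noteq> 0"
    using assms by (auto simp: parallel_def algebra_simps)
  show ?thesis
    unfolding meet_char(2)[OF assms] NX_def NY_def DE_def LH_def using lf_div[OF d] by simp
qed

lemma lf_centroid:
  assumes two: "(2::'a::field) \<noteq> 0"
  shows "4 * lf L (centroid (A,B,A',B')) =
     lf L (meet A B) + lf L (meet B A') + lf L (meet A' B') + lf L (meet B' (A::'a line))"
proof -
  define sx where "sx = fst (meet A B) + fst (meet B A') + fst (meet A' B') + fst (meet B' A)"
  define sy where "sy = snd (meet A B) + snd (meet B A') + snd (meet A' B') + snd (meet B' A)"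
  have "centroid (A,B,A',B') = (sx/4, sy/4)" by (simp add: centroid_def Let_def sx_def sy_def)
  then have "4 * lf L (centroid (A,B,A',B')) = t_of L * sx - u_of L * sy + v_of L * 4"
    using lf_div[OF four_nz[OF two], of L sx sy] by (simp add: mult.commute)
  also have "\<dots> = lf L (meet A B) + lf L (meet B A') + lf L (meet A' B') + lf L (meet B' A)"
    by (simp add: sx_def sy_def lf_def algebra_simps)
  finally show ?thesis .
qed

lemma lf_centroid_S4:
  assumes two: "(2::'a::field) \<noteq> 0" and q: "quadrilateral (A,B,A',B')"
  shows "4 * (DE (t_of A) (u_of A) (v_of A) (t_of B) (u_of B) (v_of B)
            * DE (t_of B) (u_of B) (v_of B) (t_of A') (u_of A') (v_of A')
            * DE (t_of A') (u_of A') (v_of A') (t_of B') (u_of B') (v_of B')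
            * DE (t_of B') (u_of B') (v_of B') (t_of A) (u_of A) (v_of A)) * lf L (centroid (A,B,A',B'))
    = S4 (t_of L) (u_of L) (v_of L) (t_of A) (u_of A) (v_of A) (t_of B) (u_of B) (v_of B)
         (t_of A') (u_of A') (v_of A') (t_of B') (u_of B') (v_of (B'::'a line))"
proof -
  note f = quad_facts[OF q]
  define E1 where "E1 = DE (t_of A) (u_of A) (v_of A) (t_of B) (u_of B) (v_of B)"
  define E2 where "E2 = DE (t_of B) (u_of B) (v_of B) (t_of A') (u_of A') (v_of A')"
  define E3 where "E3 = DE (t_of A') (u_of A') (v_of A') (t_of B') (u_of B') (v_of B')"
  define E4 where "E4 = DE (t_of B') (u_of B') (v_of B') (t_of A) (u_of A) (v_of A)"
  have h1: "lf L (meet A B) * E1 = LH (t_of L) (u_of L) (v_of L) (NX (t_of A) (u_of A) (v_of A) (t_of B) (u_of B) (v_of B)) (NY (t_of A) (u_of A) (v_of A) (t_of B) (u_of B) (v_of B)) E1"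
    using lf_vertex[OF f(5)] by (simp add: E1_def)
  have h2: "lf L (meet B A') * E2 = LH (t_of L) (u_of L) (v_of L) (NX (t_of B) (u_of B) (v_of B) (t_of A') (u_of A') (v_of A')) (NY (t_of B) (u_of B) (v_of B) (t_of A') (u_of A') (v_of A')) E2"
    using lf_vertex[OF f(6)] by (simp add: E2_def)
  have h3: "lf L (meet A' B') * E3 = LH (t_of L) (u_of L) (v_of L) (NX (t_of A') (u_of A') (v_of A') (t_of B') (u_of B') (v_of B')) (NY (t_of A') (u_of A') (v_of A') (t_of B') (u_of B') (v_of B')) E3"
    using lf_vertex[OF f(7)] by (simp add: E3_def)
  have h4: "lf L (meet B' A) * E4 = LH (t_of L) (u_of L) (v_of L) (NX (t_of B') (u_of B') (v_of B') (t_of A) (u_of A) (v_of A)) (NY (t_of B') (u_of B') (v_of B') (t_of A) (u_of A) (v_of A)) E4"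
    using lf_vertex[OF f(8)] by (simp add: E4_def)
  have "4 * (E1 * E2 * E3 * E4) * lf L (centroid (A,B,A',B'))
      = (E1 * E2 * E3 * E4) * (lf L (meet A B) + lf L (meet B A') + lf L (meet A' B') + lf L (meet B' A))"
    using lf_centroid[OF two, of L A B A' B'] by simp
  also have "\<dots> = (lf L (meet A B) * E1) * E2 * E3 * E4 + (lf L (meet B A') * E2) * E1 * E3 * E4
      + (lf L (meet A' B') * E3) * E1 * E2 * E4 + (lf L (meet B' A) * E4) * E1 * E2 * E3"
    by (simp add: algebra_simps)
  also have "\<dots> = S4 (t_of L) (u_of L) (v_of L) (t_of A) (u_of A) (v_of A) (t_of B) (u_of B) (v_of B)
         (t_of A') (u_of A') (v_of A') (t_of B') (u_of B') (v_of B')"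
    by (simp only: h1 h2 h3 h4) (simp add: S4_def E1_def E2_def E3_def E4_def algebra_simps)
  finally show ?thesis by (simp add: E1_def E2_def E3_def E4_def)
qed

lemma LJ:
  assumes two: "(2::'a::field) \<noteq> 0" and q: "quadrilateral (A,B,A',B')"
  shows "Jf A B A' B' (fst (centroid (A,B,A',B')) + fst X, snd (centroid (A,B,A',B')) + snd X)
       = Jf A B A' B' (centroid (A,B,A',B')) - 2 * q_inner (A,B,A',B') X (X::'a \<times> 'a)"
proof -
  note f = quad_facts[OF q]
  define c where "c = centroid (A,B,A',B')"
  define a1 where "a1 = u_of A' * t_of B' - t_of A' * u_of B'"
  define a2 where "a2 = u_of A' * t_of B - t_of A' * u_of B"
  define a3 where "a3 = u_of A * t_of B' - t_of A * u_of B'"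
  define a4 where "a4 = u_of A * t_of B - t_of A * u_of B"
  define LP where "LP = a1 * (lf A c * lin B X + lf B c * lin A X) + a2 * (lf A c * lin B' X + lf B' c * lin A X)
     + a3 * (lf A' c * lin B X + lf B c * lin A' X) + a4 * (lf A' c * lin B' X + lf B' c * lin A' X)"
  define E where "E = DE (t_of A) (u_of A) (v_of A) (t_of B) (u_of B) (v_of B)
            * DE (t_of B) (u_of B) (v_of B) (t_of A') (u_of A') (v_of A')
            * DE (t_of A') (u_of A') (v_of A') (t_of B') (u_of B') (v_of B')
            * DE (t_of B') (u_of B') (v_of B') (t_of A) (u_of A) (v_of A)"
  have "DE (t_of A) (u_of A) (v_of A) (t_of B) (u_of B) (v_of B) \<noteq> 0"
    "DE (t_of B) (u_of B) (v_of B) (t_of A') (u_of A') (v_of A') \<noteq> 0"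
    "DE (t_of A') (u_of A') (v_of A') (t_of B') (u_of B') (v_of B') \<noteq> 0"
    "DE (t_of B') (u_of B') (v_of B') (t_of A) (u_of A) (v_of A) \<noteq> 0"
    using f(5-8) by (auto simp: DE_def parallel_def algebra_simps)
  then have E0: "E \<noteq> 0" unfolding E_def by simp
  have S: "4 * E * lf L c = S4 (t_of L) (u_of L) (v_of L) (t_of A) (u_of A) (v_of A) (t_of B) (u_of B) (v_of B)
         (t_of A') (u_of A') (v_of A') (t_of B') (u_of B') (v_of B')" for L
    using lf_centroid_S4[OF two q, of L] by (simp add: E_def c_def)
  have lin_LN: "lin L X = LN (t_of L) (u_of L) (fst X) (snd X)" for L by (simp add: lin_def LN_def)
  have "-(4 * E) * LP = 0"
  proof -
    have "-(4 * E) * LP =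
       (t_of A'*u_of B' - u_of A'*t_of B') * ((4*E*lf A c) * lin B X + (4*E*lf B c) * lin A X)
     + (t_of A'*u_of B - u_of A'*t_of B) * ((4*E*lf A c) * lin B' X + (4*E*lf B' c) * lin A X)
     + (t_of A*u_of B' - u_of A*t_of B') * ((4*E*lf A' c) * lin B X + (4*E*lf B c) * lin A' X)
     + (t_of A*u_of B - u_of A*t_of B) * ((4*E*lf A' c) * lin B' X + (4*E*lf B' c) * lin A' X)"
      by (simp add: LP_def a1_def a2_def a3_def a4_def algebra_simps)
    also have "\<dots> = 0" unfolding S lin_LN by (rule J3)
    finally show ?thesis .
  qed
  then have LP0: "LP = 0" using E0 four_nz[OF two] by simp
  have "Jf A B A' B' (fst c + fst X, snd c + snd X) = Jf A B A' B' c + LP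
      + (a1 * (lin A X * lin B X) + a2 * (lin A X * lin B' X) + a3 * (lin A' X * lin B X) + a4 * (lin A' X * lin B' X))"
    unfolding J4 lf_add by (simp add: LP_def a1_def a2_def a3_def a4_def algebra_simps)
  also have "a1 * (lin A X * lin B X) + a2 * (lin A X * lin B' X) + a3 * (lin A' X * lin B X) + a4 * (lin A' X * lin B' X)
      = - 2 * q_inner (A,B,A',B') X X"
    unfolding a1_def a2_def a3_def a4_def lin_def q_inner_def q_alpha_def q_beta_def q_gamma_def prod.case
    by algebra
  finally show ?thesis using LP0 by (simp add: c_def)
qed


section \<open>Transfer of centroid and Q-form along the pencil\<close>

lemma disc_nz:
  assumes q: "quadrilateral (A,B,A',B')"
  shows "q_beta (A,B,A',B') * q_beta (A,B,A',B') - q_alpha (A,B,A',B') * q_gamma (A,B,A',(B'::'a::field line)) \<noteq> 0"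
proof -
  note f = quad_facts[OF q]
  have "q_beta (A,B,A',B') * q_beta (A,B,A',B') - q_alpha (A,B,A',B') * q_gamma (A,B,A',B')
     = (t_of A * u_of B - u_of A * t_of B) * (t_of A * u_of B' - u_of A * t_of B')
       * (t_of A' * u_of B - u_of A' * t_of B) * (t_of A' * u_of B' - u_of A' * t_of B')"
    unfolding q_alpha_def q_beta_def q_gamma_def prod.case by algebra
  moreover have "t_of A * u_of B - u_of A * t_of B \<noteq> 0" "t_of A * u_of B' - u_of A * t_of B' \<noteq> 0"
    "t_of A' * u_of B - u_of A' * t_of B \<noteq> 0" "t_of A' * u_of B' - u_of A' * t_of B' \<noteq> 0"
    using f(5-8) by (auto simp: parallel_def algebra_simps)
  ultimately show ?thesis by simp
qed

lemma transfer_alg: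
  fixes a1 b1 g1 a2 b2 g2 d1 d2 k j :: "'a::field"
  assumes h: "\<And>x y. j - 2 * ((x) * (g2 * (x) - b2 * (y)) + (y) * (- b2 * (x) + a2 * (y))) = k * (- 2 * ((d1 + x) * (g1 * (d1 + x) - b1 * (d2 + y)) + (d2 + y) * (- b1 * (d1 + x) + a1 * (d2 + y))))"
  shows "4 * g2 = 4 * (k * g1)" "4 * a2 = 4 * (k * a1)" "8 * b2 = 8 * (k * b1)"
    "8 * (k * (g1 * d1 - b1 * d2)) = 0" "8 * (k * (a1 * d2 - b1 * d1)) = 0"
proof -
  have e0: "j - 2 * ((0) * (g2 * (0) - b2 * (0)) + (0) * (- b2 * (0) + a2 * (0))) = k * (- 2 * ((d1) * (g1 * (d1) - b1 * (d2)) + (d2) * (- b1 * (d1) + a1 * (d2))))" using h[of 0 0] by simp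
  have e1: "j - 2 * ((1) * (g2 * (1) - b2 * (0)) + (0) * (- b2 * (1) + a2 * (0))) = k * (- 2 * ((d1 + 1) * (g1 * (d1 + 1) - b1 * (d2)) + (d2) * (- b1 * (d1 + 1) + a1 * (d2))))" using h[of 1 0] by simp
  have e2: "j - 2 * ((-1) * (g2 * (-1) - b2 * (0)) + (0) * (- b2 * (-1) + a2 * (0))) = k * (- 2 * ((d1 + -1) * (g1 * (d1 + -1) - b1 * (d2)) + (d2) * (- b1 * (d1 + -1) + a1 * (d2))))" using h[of "-1" 0] by simp
  have e3: "j - 2 * ((0) * (g2 * (0) - b2 * (1)) + (1) * (- b2 * (0) + a2 * (1))) = k * (- 2 * ((d1) * (g1 * (d1) - b1 * (d2 + 1)) + (d2 + 1) * (- b1 * (d1) + a1 * (d2 + 1))))" using h[of 0 1] by simp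
  have e4: "j - 2 * ((0) * (g2 * (0) - b2 * (-1)) + (-1) * (- b2 * (0) + a2 * (-1))) = k * (- 2 * ((d1) * (g1 * (d1) - b1 * (d2 + -1)) + (d2 + -1) * (- b1 * (d1) + a1 * (d2 + -1))))" using h[of 0 "-1"] by simp
  have e5: "j - 2 * ((1) * (g2 * (1) - b2 * (1)) + (1) * (- b2 * (1) + a2 * (1))) = k * (- 2 * ((d1 + 1) * (g1 * (d1 + 1) - b1 * (d2 + 1)) + (d2 + 1) * (- b1 * (d1 + 1) + a1 * (d2 + 1))))" using h[of 1 1] by simp
  have e6: "j - 2 * ((-1) * (g2 * (-1) - b2 * (-1)) + (-1) * (- b2 * (-1) + a2 * (-1))) = k * (- 2 * ((d1 + -1) * (g1 * (d1 + -1) - b1 * (d2 + -1)) + (d2 + -1) * (- b1 * (d1 + -1) + a1 * (d2 + -1))))" using h[of "-1" "-1"] by simp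
  show "4 * g2 = 4 * (k * g1)" using e0 e1 e2 by algebra
  show "4 * a2 = 4 * (k * a1)" using e0 e3 e4 by algebra
  show "8 * b2 = 8 * (k * b1)" using e0 e1 e2 e3 e4 e5 e6 by algebra
  show "8 * (k * (g1 * d1 - b1 * d2)) = 0" using e0 e1 e2 by algebra
  show "8 * (k * (a1 * d2 - b1 * d1)) = 0" using e0 e3 e4 by algebra
qed

lemma TR:
  assumes two: "(2::'a::field) \<noteq> 0"
    and q1: "quadrilateral (A,B,A',B')" and q2: "quadrilateral (C,D,C',D')"
    and h1: "pg C C' = glc x (pg A A') y (pg B B')"
    and h2: "pg D D' = glc x' (pg A A') y' (pg B (B'::'a line))"
  shows "centroid (C,D,C',D') = centroid (A,B,A',B')"
    and "\<exists>k. k \<noteq> 0 \<and> (\<forall>v w. q_inner (C,D,C',D') v w = k * q_inner (A,B,A',B') v w)"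
    and "\<And>l M. Zq C D C' D' l M \<longleftrightarrow> Zq A B A' B' l M"
proof -
  define k where "k = x * y' - y * x'"
  have JJ: "Jf C D C' D' M = k * Jf A B A' B' M" for M
    unfolding Jf_def h1 h2 gD_glc k_def by algebra
  define c1 where "c1 = centroid (A,B,A',B')"
  define c2 where "c2 = centroid (C,D,C',D')"
  define d1 where "d1 = fst c2 - fst c1"
  define d2 where "d2 = snd c2 - snd c1"
  define j where "j = Jf C D C' D' c2"
  have key: "j - 2 * q_inner (C,D,C',D') (X1,X2) (X1,X2) = k * (Jf A B A' B' c1 - 2 * q_inner (A,B,A',B') (d1 + X1, d2 + X2) (d1 + X1, d2 + X2))" for X1 X2
  proof -
    have "j - 2 * q_inner (C,D,C',D') (X1,X2) (X1,X2) = Jf C D C' D' (fst c2 + X1, snd c2 + X2)"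
      using LJ[OF two q2, of "(X1,X2)"] by (simp add: j_def c2_def)
    also have "\<dots> = k * Jf A B A' B' (fst c1 + (d1 + X1), snd c1 + (d2 + X2))"
      using JJ by (simp add: d1_def d2_def)
    also have "\<dots> = k * (Jf A B A' B' c1 - 2 * q_inner (A,B,A',B') (d1 + X1, d2 + X2) (d1 + X1, d2 + X2))"
      using LJ[OF two q1, of "(d1 + X1, d2 + X2)"] by (simp add: c1_def)
    finally show ?thesis .
  qed
  define a1 where "a1 = q_alpha (A,B,A',B')"
  define b1 where "b1 = q_beta (A,B,A',B')"
  define g1 where "g1 = q_gamma (A,B,A',B')"
  define a2 where "a2 = q_alpha (C,D,C',D')"
  define b2 where "b2 = q_beta (C,D,C',D')"
  define g2 where "g2 = q_gamma (C,D,C',D')"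
  define j' where "j' = j - k * Jf A B A' B' c1"
  have key2: "j' - 2 * (X1 * (g2 * X1 - b2 * X2) + X2 * (- b2 * X1 + a2 * X2))
      = k * (- 2 * ((d1 + X1) * (g1 * (d1 + X1) - b1 * (d2 + X2)) + (d2 + X2) * (- b1 * (d1 + X1) + a1 * (d2 + X2))))" for X1 X2
    using key[of X1 X2] unfolding j'_def a1_def b1_def g1_def a2_def b2_def g2_def q_inner_def
    by (simp add: algebra_simps)
  note T = transfer_alg[OF key2]
  have four: "(4::'a) \<noteq> 0" using four_nz[OF two] .
  have eight: "(8::'a) \<noteq> 0" using eight_nz[OF two] .
  have g: "g2 = k * g1" using T(1) four by simp
  have a: "a2 = k * a1" using T(2) four by simp
  have b: "b2 = k * b1" using T(3) eight by simp
  have kn: "k \<noteq> 0"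
  proof
    assume "k = 0"
    then have "b2 * b2 - a2 * g2 = 0" using a b g by simp
    then show False using disc_nz[OF q2] by (simp add: a2_def b2_def g2_def)
  qed
  have l1: "g1 * d1 - b1 * d2 = 0" using T(4) eight kn by simp
  have l2: "a1 * d2 - b1 * d1 = 0" using T(5) eight kn by simp
  have disc1: "b1 * b1 - a1 * g1 \<noteq> 0" using disc_nz[OF q1] by (simp add: a1_def b1_def g1_def)
  have "(b1 * b1 - a1 * g1) * d1 = 0" "(b1 * b1 - a1 * g1) * d2 = 0" using l1 l2 by algebra+
  then have "d1 = 0" "d2 = 0" using disc1 by auto
  then show "centroid (C,D,C',D') = centroid (A,B,A',B')"
    by (simp add: d1_def d2_def c1_def c2_def prod_eq_iff)
  have "q_inner (C,D,C',D') v w = k * q_inner (A,B,A',B') v w" for v w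
    using a b g unfolding q_inner_def a1_def b1_def g1_def a2_def b2_def g2_def by (simp add: algebra_simps)
  then show "\<exists>k. k \<noteq> 0 \<and> (\<forall>v w. q_inner (C,D,C',D') v w = k * q_inner (A,B,A',B') v w)"
    using kn by blast
  fix l M
  have e1: "gD (pg C C') M (dir l) = x * gD (pg A A') M (dir l) + y * gD (pg B B') M (dir l)"
    by (simp add: h1 gD_glc)
  have e2: "gD (pg D D') M (dir l) = x' * gD (pg A A') M (dir l) + y' * gD (pg B B') M (dir l)"
    by (simp add: h2 gD_glc)
  have inv: "gD (pg A A') M (dir l) = 0 \<and> gD (pg B B') M (dir l) = 0"
    if "gD (pg C C') M (dir l) = 0" "gD (pg D D') M (dir l) = 0"
  proof -
    have "k * gD (pg A A') M (dir l) = 0" "k * gD (pg B B') M (dir l) = 0"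
      using that e1 e2 unfolding k_def by algebra+
    then show ?thesis using kn by simp
  qed
  show "Zq C D C' D' l M \<longleftrightarrow> Zq A B A' B' l M"
    unfolding Zq_def using inv e1 e2 by auto
qed


lemma q_pair_sym:
  assumes "q_pair Q l1 l2" shows "q_pair Q l2 l1"
proof -
  obtain p1 p2 where "bisector_mid Q l1 (Aff p1)" "bisector_mid Q l2 (Aff p2)" "midpt p1 p2 = centroid Q"
    and o: "q_orth Q l1 l2" using assms unfolding q_pair_def by blast
  moreover have "midpt p2 p1 = midpt p1 p2" by (rule midpt_comm)
  moreover have "q_orth Q l2 l1" using o unfolding q_orth_def q_inner_def by (simp add: algebra_simps)
  ultimately show ?thesis unfolding q_pair_def by metis
qed

lemma bm_Zq:
  assumes two: "(2::'a::field) \<noteq> 0" and q: "quadrilateral (A,B,A',B')"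
  shows "bisector_mid (A,B,A',B') l (Aff M) \<longleftrightarrow> Zq A B A' B' l (M::'a \<times> 'a)"
  using L1[OF two q, of l "Aff M"] by (metis ppoint.inject)

lemma pencil_from_bm:
  assumes two: "(2::'a::field) \<noteq> 0" and q1: "quadrilateral (A,B,A',B')" and q2: "quadrilateral (C,D,C',D')"
    and bm: "\<And>l M. Zq A B A' B' l M \<Longrightarrow> Zq C D C' D' l (M::'a \<times> 'a)"
  shows "SC A B A' B' (pg C C')" "SC A B A' B' (pg D D')"
proof -
  note Z = Zq_sides[OF two q1]
  have Z2: "Zq C D C' D' A (midpt (meet B' A) (meet A B))" "Zq C D C' D' B (midpt (meet A B) (meet B A'))"
    "Zq C D C' D' A' (midpt (meet B A') (meet A' B'))" "Zq C D C' D' B' (midpt (meet A' B') (meet B' A))"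
    using bm Z by blast+
  then show "SC A B A' B' (pg C C')" "SC A B A' B' (pg D D')"
    by (auto simp: SC_def Zq_def)
qed

theorem corollary6p10:
  fixes Q1 Q2 :: "'a::field quad"
  assumes "(2::'a) \<noteq> 0"
    and "quadrilateral Q1" and "quadrilateral Q2"
  shows "(\<forall>l m. bisector_mid Q1 l m \<longleftrightarrow> bisector_mid Q2 l m)
         \<longleftrightarrow> bisector_field Q1 = bisector_field Q2"
proof -
  note two = assms(1)
  obtain A B A' B' where Q1: "Q1 = (A,B,A',B')" by (metis prod.collapse)
  obtain C D C' D' where Q2: "Q2 = (C,D,C',D')" by (metis prod.collapse)
  have q1: "quadrilateral (A,B,A',B')" using assms(2) Q1 by simp
  have q2: "quadrilateral (C,D,C',D')" using assms(3) Q2 by simp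
  show ?thesis
  proof
    assume bm: "\<forall>l m. bisector_mid Q1 l m \<longleftrightarrow> bisector_mid Q2 l m"
    have ZZ: "Zq A B A' B' l M \<longleftrightarrow> Zq C D C' D' l M" for l M
      using bm bm_Zq[OF two q1] bm_Zq[OF two q2] Q1 Q2 by metis
    have sc: "SC A B A' B' (pg C C')" "SC A B A' B' (pg D D')"
      using pencil_from_bm[OF two q1 q2] ZZ by blast+
    obtain x y where h1: "pg C C' = glc x (pg A A') y (pg B B')" using LS[OF two q1 sc(1)] by blast
    obtain x' y' where h2: "pg D D' = glc x' (pg A A') y' (pg B B')" using LS[OF two q1 sc(2)] by blast
    note T = TR[OF two q1 q2 h1 h2]
    obtain k where kn: "k \<noteq> 0" and kq: "\<And>v w. q_inner (C,D,C',D') v w = k * q_inner (A,B,A',B') v w"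
      using T(2) by blast
    have orth: "q_orth Q1 l1 l2 \<longleftrightarrow> q_orth Q2 l1 l2" for l1 l2
      using kn kq by (simp add: q_orth_def Q1 Q2)
    have bmm: "bisector_mid Q1 l m \<longleftrightarrow> bisector_mid Q2 l m" for l m using bm by blast
    have cQ: "centroid Q1 = centroid Q2" using T(1) Q1 Q2 by simp
    have qp: "q_pair Q1 l1 l2 \<longleftrightarrow> q_pair Q2 l1 l2" for l1 l2
      unfolding q_pair_def by (simp only: bmm orth cQ)
    show "bisector_field Q1 = bisector_field Q2"
      unfolding bisector_field_def using qp by simp
  next
    assume bf: "bisector_field Q1 = bisector_field Q2"
    have sides: "SC A B A' B' (pg L L')"
      if qp2: "q_pair (C,D,C',D') L L'" and ne: "L \<noteq> L'" for L L'
    proof -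
      have "{L, L'} \<in> bisector_field Q2" using qp2 Q2 unfolding bisector_field_def by blast
      then have "{L, L'} \<in> bisector_field Q1" using bf by simp
      then obtain l1 l2 where e: "{L, L'} = {l1, l2}" and p: "q_pair (A,B,A',B') l1 l2"
        using Q1 unfolding bisector_field_def by blast
      from e have "(L = l1 \<and> L' = l2) \<or> (L = l2 \<and> L' = l1)" by (auto simp: doubleton_eq_iff)
      then have "q_pair (A,B,A',B') L L'" using p q_pair_sym by blast
      then show ?thesis using LK[OF two q1 _ ne] by blast
    qed
    have sc: "SC A B A' B' (pg C C')" "SC A B A' B' (pg D D')"
      using sides[OF q_pair_sides(1)[OF two q2]] sides[OF q_pair_sides(2)[OF two q2]]
        quad_facts(10,13)[OF q2] by blast+
    obtain x y where h1: "pg C C' = glc x (pg A A') y (pg B B')" using LS[OF two q1 sc(1)] by blast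
    obtain x' y' where h2: "pg D D' = glc x' (pg A A') y' (pg B B')" using LS[OF two q1 sc(2)] by blast
    note T = TR[OF two q1 q2 h1 h2]
    have "bisector_mid Q1 l m \<longleftrightarrow> bisector_mid Q2 l m" for l m
      using L1[OF two q1, of l m] L1[OF two q2, of l m] T(3) Q1 Q2 by simp
    then show "\<forall>l m. bisector_mid Q1 l m \<longleftrightarrow> bisector_mid Q2 l m" by blast
  qed
qed

end
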